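(* Let $d\ge2$, $N\ge1$, $s\in\{0,1,\dots,N\}$ and $\mathbf{p}=(p_1,\dots,p_d)$ a probability vector with all $p_i>0$, and let $K$ be the generalized Ehrenfest urn model with these parameters. 1. $K$ has eigenvalue $\beta_n=\frac{(N-s)_{[n]}}{N_{[n]}}$, $0\le n\le N$, with multiplicity $\binom{d+n-2}{n}$ and corresponding eigenbasis $\{K_{\mathbf{n}}(\cdot;N,\mathbf{p})\}_{\mathbf{n}\in\mathbb{N}_0^{d-1},|\mathbf{n}|=n}$. In particular $\beta_0=1$ with multiplicity $1$ and $\beta_1=1-\frac{s}{N}$ with multiplicity $d-1$. 2. If the process starts from $\mathbf{x}\in\mathcal{X}_N^d$, the chi-square distance after $l$ steps is $\chi_{\mathbf{x}}^2(l)=\sum_{n=1}^N\beta_n^{2l}h_n(\mathbf{x},\mathbf{x})$.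
   Context: Notation: $|\mathbf{x}|=\sum_ix_i$, $|\mathbf{x}_j|=x_1+\dots+x_j$ ($|\mathbf{x}_0|=0$), $|\mathbf{p}^j|=p_j+\dots+p_d$; $a_{(k)}=a(a+1)\cdots(a+k-1)$, $a_{[k]}=a(a-1)\cdots(a-k+1)$, $a_{(0)}=a_{[0]}=1$. $\mathcal{X}_N^d=\{\mathbf{x}\in\mathbb{N}_0^d:|\mathbf{x}|=N\}$; $\mathcal{M}(\mathbf{x}\mid N,\mathbf{p})=\frac{N!}{x_1!\cdots x_d!}\prod_ip_i^{x_i}$. Generalized Ehrenfest urn model: $N$ indistinguishable balls in $d$ urns; at each step choose $s$ of the $N$ balls uniformly at random and redistribute each independently into urn $j$ with probability $p_j$; the state is the vector of urn counts. Its stationary distribution is $\mathcal{M}(\cdot\mid N,\mathbf{p})$. Univariate Krawtchouk polynomials: $K_n(x;M,q)=\sum_{j=0}^n\frac{(-n)_{(j)}(-x)_{(j)}}{(-M)_{(j)}j!\,q^j}$. Multivariate Krawtchouk polynomials: for $\mathbf{n}=(n_1,\dots,n_{d-1})\in\mathbb{N}_0^{d-1}$, $|\mathbf{n}|\le N$, $K_{\mathbf{n}}(\mathbf{x};N,\mathbf{p})=\frac{(-1)^{|\mathbf{n}|}}{N_{[|\mathbf{n}|]}}\prod_{j=1}^{d-1}(-N+|\mathbf{x}_{j-1}|+|\mathbf{n}^{j+1}|)_{(n_j)}K_{n_j}\big(x_j;N-|\mathbf{x}_{j-1}|-|\mathbf{n}^{j+1}|,\frac{p_j}{|\mathbf{p}^j|}\big)$,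 with $|\mathbf{n}^{j+1}|=n_{j+1}+\dots+n_{d-1}$, and each $(-M)_{(n_j)}K_{n_j}(\cdot;M,\cdot)$ read as a polynomial after termwise cancellation of $(-M)_{(j)}$. Kernel polynomials: $h_n(\mathbf{x},\mathbf{y})=\sum_{\mathbf{n}\in\mathbb{N}_0^{d-1},|\mathbf{n}|=n}\frac{K_{\mathbf{n}}(\mathbf{x};N,\mathbf{p})K_{\mathbf{n}}(\mathbf{y};N,\mathbf{p})}{\mathbf{E}_{\mathcal{M}(\cdot\mid N,\mathbf{p})}[K_{\mathbf{n}}(\mathbf{X};N,\mathbf{p})^2]}$. Chi-square distance: $\chi_{\mathbf{x}}^2(l)=\sum_{\mathbf{y}}\frac{[K^l(\mathbf{x},\mathbf{y})-\pi(\mathbf{y})]^2}{\pi(\mathbf{y})}$ with $\pi=\mathcal{M}(\cdot\mid N,\mathbf{p})$. *)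

theory Defs
  imports Complex_Main
begin

text \<open>Vectors are functions nat => nat (or real) indexed by 1..d, zero outside.\<close>

definition states :: "nat \<Rightarrow> nat \<Rightarrow> (nat \<Rightarrow> nat) set" where
  "states d N = {x. (\<forall>i. i \<notin> {1..d} \<longrightarrow> x i = 0) \<and> (\<Sum>i=1..d. x i) = N}"

definition prob_vec :: "nat \<Rightarrow> (nat \<Rightarrow> real) \<Rightarrow> bool" where
  "prob_vec d p \<longleftrightarrow> (\<forall>i\<in>{1..d}. p i > 0) \<and> (\<Sum>i=1..d. p i) = 1"

definition falling :: "real \<Rightarrow> nat \<Rightarrow> real" where
  "falling a k = (\<Prod>i<k. a - real i)"

definition multinom :: "nat \<Rightarrow> nat \<Rightarrow> (nat \<Rightarrow> real) \<Rightarrow> (nat \<Rightarrow> nat) \<Rightarrow> real" where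
  "multinom d N p x = fact N / (\<Prod>i=1..d. fact (x i)) * (\<Prod>i=1..d. p i ^ x i)"

text \<open>One-step transition kernel of the generalized Ehrenfest urn: choose s of the N balls
  uniformly (k_i balls from urn i, multivariate hypergeometric), redistribute them
  independently according to p (m_i balls into urn i, multinomial).\<close>
definition ehrenfest :: "nat \<Rightarrow> nat \<Rightarrow> nat \<Rightarrow> (nat \<Rightarrow> real) \<Rightarrow> (nat \<Rightarrow> nat) \<Rightarrow> (nat \<Rightarrow> nat) \<Rightarrow> real" where
  "ehrenfest d N s p x y =
     (\<Sum>k\<in>states d s. \<Sum>m\<in>states d s.
        if (\<forall>i. k i \<le> x i) \<and> (\<forall>i. x i - k i + m i = y i)
        then (\<Prod>i=1..d. real (x i choose k i)) / real (N choose s) * multinom d s p m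
        else 0)"

fun ehrenfest_pow :: "nat \<Rightarrow> nat \<Rightarrow> nat \<Rightarrow> (nat \<Rightarrow> real) \<Rightarrow> nat \<Rightarrow> (nat \<Rightarrow> nat) \<Rightarrow> (nat \<Rightarrow> nat) \<Rightarrow> real" where
  "ehrenfest_pow d N s p 0 x y = (if x = y then 1 else 0)"
| "ehrenfest_pow d N s p (Suc l) x y =
     (\<Sum>z\<in>states d N. ehrenfest_pow d N s p l x z * ehrenfest d N s p z y)"

text \<open>(-M)_(n) K_n(x; M, q), read as a polynomial after termwise cancellation:
  sum_j (-n)_(j) (-x)_(j) (-M+j)_(n-j) / (j! q^j).\<close>
definition kraw_scaled :: "nat \<Rightarrow> real \<Rightarrow> real \<Rightarrow> real \<Rightarrow> real" where
  "kraw_scaled n x M q =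
     (\<Sum>j=0..n. pochhammer (- real n) j * pochhammer (- x) j * pochhammer (- M + real j) (n - j)
                / (fact j * q ^ j))"

text \<open>Multivariate Krawtchouk polynomial K_n(x; N, p), n indexed by 1..d-1.\<close>
definition mkraw :: "nat \<Rightarrow> nat \<Rightarrow> (nat \<Rightarrow> real) \<Rightarrow> (nat \<Rightarrow> nat) \<Rightarrow> (nat \<Rightarrow> nat) \<Rightarrow> real" where
  "mkraw d N p n x =
     (-1) ^ (\<Sum>i=1..d-1. n i) / falling (real N) (\<Sum>i=1..d-1. n i) *
     (\<Prod>j=1..d-1.
        kraw_scaled (n j) (real (x j))
          (real N - real (\<Sum>i\<in>{1..<j}. x i) - real (\<Sum>i\<in>{j+1..d-1}. n i))
          (p j / (\<Sum>i=j..d. p i)))"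

definition kernel_poly :: "nat \<Rightarrow> nat \<Rightarrow> (nat \<Rightarrow> real) \<Rightarrow> nat \<Rightarrow> (nat \<Rightarrow> nat) \<Rightarrow> (nat \<Rightarrow> nat) \<Rightarrow> real" where
  "kernel_poly d N p n x y =
     (\<Sum>nn\<in>states (d-1) n. mkraw d N p nn x * mkraw d N p nn y /
        (\<Sum>z\<in>states d N. multinom d N p z * (mkraw d N p nn z)^2))"

definition chi_sq :: "nat \<Rightarrow> nat \<Rightarrow> nat \<Rightarrow> (nat \<Rightarrow> real) \<Rightarrow> (nat \<Rightarrow> nat) \<Rightarrow> nat \<Rightarrow> real" where
  "chi_sq d N s p x l =
     (\<Sum>y\<in>states d N. (ehrenfest_pow d N s p l x y - multinom d N p y)^2 / multinom d N p y)"

definition ehr_beta :: "nat \<Rightarrow> nat \<Rightarrow> nat \<Rightarrow> real" where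
  "ehr_beta N s n = falling (real N - real s) n / falling (real N) n"

end

theory Submission
  imports Defs "Jordan_Normal_Form.Determinant"
begin


lemma sum_nth_set: "distinct xs \<Longrightarrow> (\<Sum>b\<in>{0..<length xs}. f (xs ! b)) = (\<Sum>x\<in>set xs. f x)"
  using sum.reindex_bij_betw[OF bij_betw_nth[of xs "{..<length xs}" "set xs"], of f]
  by (simp add: atLeast0LessThan)

lemma completeness_abstract:
  fixes P :: "'i \<Rightarrow> 'x \<Rightarrow> real" and pi :: "'x \<Rightarrow> real" and w :: "'i \<Rightarrow> real"
  assumes fin: "finite I" "finite X" and card: "card I = card X"
    and orth: "\<And>i i'. i \<in> I \<Longrightarrow> i' \<in> I \<Longrightarrow> (\<Sum>x\<in>X. pi x * P i x * P i' x) = (if i = i' then w i else 0)"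
    and wnz: "\<And>i. i \<in> I \<Longrightarrow> w i \<noteq> 0"
    and x: "x \<in> X" and y: "y \<in> X"
  shows "(\<Sum>i\<in>I. pi x * P i x * P i y / w i) = (if x = y then 1 else 0)"
proof -
  obtain xs where xs: "distinct xs" "set xs = X" using finite_distinct_list[OF fin(2)] by blast
  obtain js where js: "distinct js" "set js = I" using finite_distinct_list[OF fin(1)] by blast
  define n where "n = length xs"
  have ln: "length js = n" using distinct_card[OF xs(1)] distinct_card[OF js(1)] card xs js n_def by simp
  define A where "A = mat n n (\<lambda>(a,b). P (js!a) (xs!b))"
  define B where "B = mat n n (\<lambda>(b,a). pi (xs!b) * P (js!a) (xs!b) / w (js!a))"
  have AB: "A * B = 1\<^sub>m n"
  proof (rule eq_matI)
    fix a a' assume "a < dim_row (1\<^sub>m n :: real mat)" "a' < dim_col (1\<^sub>m n :: real mat)"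
    then have a: "a < n" "a' < n" by auto
    have ia: "js ! a \<in> I" "js ! a' \<in> I" using a ln js by auto
    have "(A * B) $$ (a, a') = (\<Sum>b\<in>{0..<n}. P (js!a) (xs!b) * (pi (xs!b) * P (js!a') (xs!b) / w (js!a')))"
      using a unfolding A_def B_def by (simp add: scalar_prod_def)
    also have "\<dots> = (\<Sum>z\<in>X. pi z * P (js!a) z * P (js!a') z) / w (js!a')"
      unfolding n_def sum_nth_set[OF xs(1), of "\<lambda>z. P (js!a) z * (pi z * P (js!a') z / w (js!a'))"] xs(2)
      by (simp add: sum_divide_distrib mult_ac)
    also have "\<dots> = (if a = a' then 1 else 0)"
      unfolding orth[OF ia] using wnz[OF ia(1)] nth_eq_iff_index_eq[OF js(1)] a ln by auto
    finally show "(A * B) $$ (a, a') = 1\<^sub>m n $$ (a, a')" using a by simp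
  qed (auto simp: A_def B_def)
  have BA: "B * A = 1\<^sub>m n"
    by (rule mat_mult_left_right_inverse[OF _ _ AB]) (auto simp: A_def B_def)
  obtain b b' where b: "b < n" "xs ! b = x" "b' < n" "xs ! b' = y"
    using x y xs unfolding n_def by (metis in_set_conv_nth)
  have "(B * A) $$ (b, b') = (\<Sum>a\<in>{0..<n}. pi (xs!b) * P (js!a) (xs!b) / w (js!a) * P (js!a) (xs!b'))"
    using b unfolding A_def B_def by (simp add: scalar_prod_def)
  also have "\<dots> = (\<Sum>i\<in>I. pi x * P i x * P i y / w i)"
    using sum_nth_set[OF js(1), of "\<lambda>i. pi x * P i x / w i * P i y"] js(2) ln b by (simp add: mult_ac)
  finally have "(\<Sum>i\<in>I. pi x * P i x * P i y / w i) = (B * A) $$ (b, b')" ..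
  also have "\<dots> = (if b = b' then 1 else 0)" unfolding BA using b by simp
  also have "(b = b') = (x = y)" using b nth_eq_iff_index_eq[OF xs(1)] unfolding n_def by auto
  finally show ?thesis .
qed



definition kA :: "nat \<Rightarrow> real \<Rightarrow> real \<Rightarrow> nat \<Rightarrow> real" where
 "kA n M q j = pochhammer (- real n) j * pochhammer (- M + real j) (n - j) / (fact j * q ^ j)"

lemma KS_alt: "kraw_scaled n x M q = (\<Sum>j=0..n. kA n M q j * pochhammer (-x) j)"
  unfolding kraw_scaled_def kA_def by (simp add: algebra_simps)

lemma poch_shift: "pochhammer (x - 1) j = pochhammer (x::real) j - of_nat j * pochhammer x (j - 1)"
proof (cases j)
  case 0 then show ?thesis by simp
next
  case (Suc i)
  have "pochhammer (x - 1) (Suc i) = (x - 1) * pochhammer x i"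
    by (simp add: pochhammer_rec)
  moreover have "pochhammer x (Suc i) = pochhammer x i * (x + of_nat i)"
    by (simp add: pochhammer_Suc)
  ultimately show ?thesis using Suc by (simp add: algebra_simps)
qed

lemma kA_top: "kA n M q (Suc n) = 0"
  unfolding kA_def by (simp add: pochhammer_eq_0_iff)

lemma kA_step: assumes "q \<noteq> 0" "i \<le> n"
  shows "kA n M q i - q * of_nat (Suc i) * kA n M q (Suc i) = kA n (M - 1) q i"
proof -
  define y where "y = - M + real i"
  have pn: "pochhammer (- real n) (Suc i) = pochhammer (- real n) i * (- real n + real i)"
    by (simp add: pochhammer_Suc)
  have key: "pochhammer y (n - i) - (- real n + real i) * pochhammer (y+1) (n - i - 1) = pochhammer (y+1) (n-i)"
  proof (cases "n - i")
    case 0 then have "n = i" using assms by simp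
    then show ?thesis using 0 by simp
  next
    case (Suc r)
    then have "real n - real i = real r + 1" using assms by linarith
    moreover have "pochhammer y (Suc r) = y * pochhammer (y+1) r" by (simp add: pochhammer_rec)
    moreover have "pochhammer (y+1) (Suc r) = pochhammer (y+1) r * (y + 1 + real r)" by (simp add: pochhammer_Suc)
    ultimately show ?thesis using Suc by (simp add: algebra_simps)
  qed
  have e1: "- M + real (Suc i) = y + 1" unfolding y_def by simp
  have e2: "n - Suc i = n - i - 1" by simp
  have e3: "- (M - 1) + real i = y + 1" unfolding y_def by simp
  have a1: "kA n M q i = pochhammer (- real n) i / (fact i * q^i) * pochhammer y (n - i)"
    unfolding kA_def y_def by simp
  have a2: "q * of_nat (Suc i) * kA n M q (Suc i) = pochhammer (- real n) i / (fact i * q^i) * ((- real n + real i) * pochhammer (y+1) (n - i - 1))"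
  proof -
    have "q * of_nat (Suc i) * kA n M q (Suc i) = q * of_nat (Suc i) * (pochhammer (- real n) i * (- real n + real i) * pochhammer (y+1) (n - i - 1) / (fact (Suc i) * q ^ Suc i))"
      unfolding kA_def pn e1 e2 by simp
    also have "\<dots> = pochhammer (- real n) i / (fact i * q^i) * ((- real n + real i) * pochhammer (y+1) (n - i - 1))"
      using assms(1) by (simp add: fact_Suc field_simps del: of_nat_Suc)
    finally show ?thesis .
  qed
  have "kA n M q i - q * of_nat (Suc i) * kA n M q (Suc i)
     = pochhammer (- real n) i / (fact i * q^i) * (pochhammer y (n - i) - (- real n + real i) * pochhammer (y+1) (n - i - 1))"
    unfolding a1 a2 by (simp add: algebra_simps)
  also have "\<dots> = kA n (M - 1) q i" unfolding key kA_def e3 by simp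
  finally show ?thesis .
qed

lemma sum_shift0: assumes "f 0 = 0" "f (Suc n) = (0::real)"
  shows "(\<Sum>j=0..n. f j) = (\<Sum>i=0..n. f (Suc i))"
proof -
  have "(\<Sum>j=0..Suc n. f j) = f 0 + (\<Sum>i=0..n. f (Suc i))"
    by (subst sum.atLeast0_atMost_Suc_shift) simp
  moreover have "(\<Sum>j=0..Suc n. f j) = (\<Sum>j=0..n. f j) + f (Suc n)" by simp
  ultimately show ?thesis using assms by simp
qed

lemma KS_step: assumes "q \<noteq> 0"
  shows "q * kraw_scaled n (z+1) M q + (1-q) * kraw_scaled n z M q = kraw_scaled n z (M-1) q"
proof -
  define T where "T = (\<Sum>j=0..n. kA n M q j * of_nat j * pochhammer (-z) (j-1))"
  have "kraw_scaled n (z+1) M q = (\<Sum>j=0..n. kA n M q j * (pochhammer (-z) j - of_nat j * pochhammer (-z) (j-1)))"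
  proof -
    have "- (z+1) = -z - 1" by simp
    then show ?thesis unfolding KS_alt using poch_shift[of "-z"] by (intro sum.cong) auto
  qed
  also have "\<dots> = kraw_scaled n z M q - T"
    unfolding KS_alt T_def by (simp add: algebra_simps sum_subtractf)
  finally have h1: "kraw_scaled n (z+1) M q = kraw_scaled n z M q - T" .
  have h2: "T = (\<Sum>i=0..n. kA n M q (Suc i) * of_nat (Suc i) * pochhammer (-z) i)"
    unfolding T_def by (subst sum_shift0) (simp_all add: kA_top)
  have "q * kraw_scaled n (z+1) M q + (1-q) * kraw_scaled n z M q = kraw_scaled n z M q - q * T"
    unfolding h1 by (simp add: algebra_simps)
  also have "\<dots> = (\<Sum>i=0..n. (kA n M q i - q * of_nat (Suc i) * kA n M q (Suc i)) * pochhammer (-z) i)"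
    unfolding h2 KS_alt by (simp add: algebra_simps sum_subtractf sum_distrib_left)
  also have "\<dots> = kraw_scaled n z (M-1) q"
    unfolding KS_alt using kA_step[OF assms] by (intro sum.cong) auto
  finally show ?thesis .
qed

lemma pascal_sum:
  "(\<Sum>y=0..Suc s. real (Suc s choose y) * h y) =
     (\<Sum>y=0..s. real (s choose y) * h (Suc y)) + (\<Sum>y=0..s. real (s choose y) * (h y::real))"
proof -
  have e1: "(\<Sum>y=0..Suc s. real (Suc s choose y) * h y) = h 0 + (\<Sum>y=0..s. real (Suc s choose Suc y) * h (Suc y))"
    by (subst sum.atLeast0_atMost_Suc_shift) simp
  have e2: "(\<Sum>y=0..s. real (Suc s choose Suc y) * h (Suc y)) =
     (\<Sum>y=0..s. real (s choose y) * h (Suc y)) + (\<Sum>y=0..s. real (s choose Suc y) * h (Suc y))"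
    by (simp add: algebra_simps sum.distrib)
  have e3: "(\<Sum>y=0..Suc s. real (s choose y) * h y) = h 0 + (\<Sum>y=0..s. real (s choose Suc y) * h (Suc y))"
    by (subst sum.atLeast0_atMost_Suc_shift) simp
  have e4: "(\<Sum>y=0..Suc s. real (s choose y) * h y) = (\<Sum>y=0..s. real (s choose y) * h y)"
    by simp
  show ?thesis using e1 e2 e3 e4 by simp
qed

lemma U1: assumes "a \<noteq> 0" "a + b \<noteq> 0"
  shows "(\<Sum>y=0..s. real (s choose y) * a ^ y * b ^ (s - y) * kraw_scaled n (z + real y) M (a/(a+b)))
        = (a+b) ^ s * kraw_scaled n z (M - real s) (a/(a+b))"
  using assms
proof (induction s arbitrary: z M)
  case 0 then show ?case by simp
next
  case (Suc s)
  define q where "q = a/(a+b)"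
  have q0: "q \<noteq> 0" unfolding q_def using Suc.prems by simp
  define h where "h y = a ^ y * b ^ (Suc s - y) * kraw_scaled n (z + real y) M q" for y
  have "(\<Sum>y=0..Suc s. real (Suc s choose y) * a ^ y * b ^ (Suc s - y) * kraw_scaled n (z + real y) M q)
      = (\<Sum>y=0..Suc s. real (Suc s choose y) * h y)" unfolding h_def by (simp add: mult.assoc)
  also have "\<dots> = (\<Sum>y=0..s. real (s choose y) * h (Suc y)) + (\<Sum>y=0..s. real (s choose y) * h y)"
    by (rule pascal_sum)
  also have "(\<Sum>y=0..s. real (s choose y) * h (Suc y)) = a * (\<Sum>y=0..s. real (s choose y) * a ^ y * b ^ (s - y) * kraw_scaled n ((z+1) + real y) M q)"
    unfolding h_def sum_distrib_left by (intro sum.cong) (simp_all add: algebra_simps)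
  also have "\<dots> = a * ((a+b)^s * kraw_scaled n (z+1) (M - real s) q)"
    using Suc.IH[of "z+1" M] Suc.prems unfolding q_def by simp
  also have "(\<Sum>y=0..s. real (s choose y) * h y) = b * (\<Sum>y=0..s. real (s choose y) * a ^ y * b ^ (s - y) * kraw_scaled n (z + real y) M q)"
    unfolding h_def sum_distrib_left by (intro sum.cong) (simp_all add: algebra_simps Suc_diff_le)
  also have "\<dots> = b * ((a+b)^s * kraw_scaled n z (M - real s) q)"
    using Suc.IH[of z M] Suc.prems unfolding q_def by simp
  also have "a * ((a+b)^s * kraw_scaled n (z+1) (M - real s) q) + b * ((a+b)^s * kraw_scaled n z (M - real s) q)
     = (a+b)^Suc s * (q * kraw_scaled n (z+1) (M - real s) q + (1-q) * kraw_scaled n z (M - real s) q)"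
  proof -
    have h1: "(a+b) * q = a" "(a+b) * (1-q) = b" unfolding q_def using Suc.prems by (simp_all add: field_simps)
    have "(a+b)^Suc s * (q * kraw_scaled n (z+1) (M - real s) q + (1-q) * kraw_scaled n z (M - real s) q)
      = (a+b)^s * (((a+b)*q) * kraw_scaled n (z+1) (M - real s) q + ((a+b)*(1-q)) * kraw_scaled n z (M - real s) q)"
      by (simp only: power_Suc) (simp add: algebra_simps)
    then show ?thesis unfolding h1 by (simp add: algebra_simps)
  qed
  also have "\<dots> = (a+b)^Suc s * kraw_scaled n z (M - real (Suc s)) q"
    using KS_step[OF q0, of n z "M - real s"] by (simp add: algebra_simps)
  finally show ?case unfolding q_def .
qed

lemma poch_neg_falling: "pochhammer (- x) j = (-1) ^ j * falling x j"
  by (induction j) (simp_all add: falling_def pochhammer_Suc algebra_simps)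

lemma falling_Suc: "falling x (Suc j) = falling x j * (x - real j)"
  by (simp add: falling_def)

lemma falling_fact: "j \<le> x \<Longrightarrow> falling (real x) j = fact x / fact (x - j)"
proof (induction j)
  case 0 then show ?case by (simp add: falling_def)
next
  case (Suc j)
  then have "x - j = Suc (x - Suc j)" by simp
  then have f: "fact (x - j) = real (x - j) * (fact (x - Suc j) :: real)" by (simp add: fact_Suc)
  have r: "real (x - j) = real x - real j" using Suc by simp
  have nz: "real (x - j) \<noteq> 0" using Suc by simp
  have "falling (real x) (Suc j) = fact x / fact (x - j) * (real x - real j)"
    using Suc by (simp add: falling_Suc)
  also have "\<dots> = fact x / fact (x - Suc j)" unfolding f r[symmetric] using nz by simp
  finally show ?case .
qed

lemma falling_nat_zero: "x < j \<Longrightarrow> falling (real x) j = 0"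
  unfolding falling_def by (auto intro!: prod_zero bexI[of _ x])

lemma choose_falling: "j \<le> x \<Longrightarrow> x \<le> L \<Longrightarrow>
   real (L choose x) * falling (real x) j = falling (real L) j * real ((L - j) choose (x - j))"
  by (simp add: falling_fact binomial_fact field_simps)

lemma KS_same: "kraw_scaled n z z q = pochhammer (- z) n * (1 - 1/q) ^ n"
proof -
  have "kraw_scaled n z z q = (\<Sum>i=0..n. pochhammer (- z) n * (pochhammer (- real n) i / fact i * (1/q)^i))"
    unfolding kraw_scaled_def
  proof (intro sum.cong refl)
    fix i assume "i \<in> {0..n}"
    then have "pochhammer (-z) n = pochhammer (-z) i * pochhammer (-z + real i) (n - i)"
      by (intro pochhammer_product) auto
    then show "pochhammer (- real n) i * pochhammer (- z) i * pochhammer (- z + real i) (n - i) / (fact i * q ^ i) =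
         pochhammer (- z) n * (pochhammer (- real n) i / fact i * (1 / q) ^ i)"
      by (simp add: field_simps power_one_over)
  qed
  also have "\<dots> = pochhammer (- z) n * (\<Sum>i\<le>n. real (n choose i) * (- 1/q)^i * 1 ^ (n - i))"
    unfolding sum_distrib_left[symmetric] atLeast0AtMost
  proof (intro arg_cong[where f="\<lambda>t. _ * t"] sum.cong refl)
    fix i
    have "pochhammer (- real n) i / fact i = (-1)^i * (real n gchoose i)"
      by (simp add: gbinomial_pochhammer)
    then show "pochhammer (- real n) i / fact i * (1 / q) ^ i = real (n choose i) * (- 1 / q) ^ i * 1 ^ (n - i)"
      by (simp add: binomial_gbinomial power_minus' power_mult_distrib[symmetric] field_simps)
  qed
  also have "\<dots> = pochhammer (- z) n * (1 - 1/q) ^ n"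
    using binomial_ring[of "- 1/q" 1 n] by simp
  finally show ?thesis .
qed



lemma falling0: "0 < j \<Longrightarrow> falling 0 j = 0"
  using falling_nat_zero[of 0 j] by simp

lemma KS_moment: assumes "a \<noteq> 0" "a + b \<noteq> 0"
  shows "(\<Sum>x=0..L. real (L choose x) * a ^ x * b ^ (L - x) * pochhammer (- real x) j * kraw_scaled n (real x) (real L) (a/(a+b)))
    = (if j \<le> L then (-1)^j * falling (real L) j * a ^ j * (a+b) ^ (L - j) * kraw_scaled n (real j) (real j) (a/(a+b)) else 0)"
proof (cases "j \<le> L")
  case False
  then show ?thesis by (simp add: poch_neg_falling falling_nat_zero)
next
  case True
  define q where "q = a/(a+b)"
  define g where "g x = real (L choose x) * a ^ x * b ^ (L - x) * pochhammer (- real x) j * kraw_scaled n (real x) (real L) q" for x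
  have "(\<Sum>x=0..L. g x) = (\<Sum>x=j..L. g x)"
    by (rule sum.mono_neutral_right) (auto simp: g_def poch_neg_falling falling_nat_zero falling0)
  also have "\<dots> = (\<Sum>y=0..L-j. g (j + y))"
    by (subst sum.atLeastAtMost_shift_0[OF True]) (simp add: comp_def)
  also have "\<dots> = (-1)^j * falling (real L) j * a ^ j * (\<Sum>y=0..L-j. real ((L-j) choose y) * a ^ y * b ^ ((L-j) - y) * kraw_scaled n (real j + real y) (real L) q)"
    unfolding sum_distrib_left
  proof (intro sum.cong refl)
    fix y assume y: "y \<in> {0..L-j}"
    have "g (j+y) = (-1)^j * (real (L choose (j+y)) * falling (real (j+y)) j) * a ^ (j+y) * b ^ (L - (j+y)) * kraw_scaled n (real j + real y) (real L) q"
      unfolding g_def poch_neg_falling by (simp add: algebra_simps)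
    also have "real (L choose (j+y)) * falling (real (j+y)) j = falling (real L) j * real ((L-j) choose y)"
      using choose_falling[of j "j+y" L] y True by simp
    finally have gy: "g (j+y) = (-1)^j * (falling (real L) j * real ((L-j) choose y)) * a ^ (j+y) * b ^ (L - (j+y)) * kraw_scaled n (real j + real y) (real L) q" .
    have "L - (j+y) = L - j - y" by simp
    then show "g (j+y) = (-1)^j * falling (real L) j * a ^ j * (real ((L-j) choose y) * a ^ y * b ^ ((L-j) - y) * kraw_scaled n (real j + real y) (real L) q)"
      unfolding gy by (simp only: power_add) (simp add: mult_ac)
  qed
  also have "\<dots> = (-1)^j * falling (real L) j * a ^ j * ((a+b) ^ (L-j) * kraw_scaled n (real j) (real L - real (L-j)) q)"
    using U1[OF assms, of "L-j" n "real j" "real L"] unfolding q_def by simp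
  also have "real L - real (L-j) = real j" using True by (simp add: of_nat_diff)
  finally show ?thesis using True unfolding g_def q_def by simp
qed

lemma KS_same_nat: "j < n \<Longrightarrow> kraw_scaled n (real j) (real j) q = 0"
  by (simp add: KS_same pochhammer_of_nat_eq_0_iff)

lemma kA_lead: "kA n M q n = (-1)^n / q^n"
  unfolding kA_def by (simp add: pochhammer_same)



lemma UO_lt: assumes "a \<noteq> 0" "a + b \<noteq> 0" "m < n"
  shows "(\<Sum>x=0..L. real (L choose x) * a ^ x * b ^ (L - x) * kraw_scaled m (real x) (real L) (a/(a+b)) * kraw_scaled n (real x) (real L) (a/(a+b))) = 0"
proof -
  define q where "q = a/(a+b)"
  have "(\<Sum>x=0..L. real (L choose x) * a ^ x * b ^ (L - x) * kraw_scaled m (real x) (real L) q * kraw_scaled n (real x) (real L) q)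
     = (\<Sum>x=0..L. \<Sum>j=0..m. kA m (real L) q j * (real (L choose x) * a ^ x * b ^ (L - x) * pochhammer (- real x) j * kraw_scaled n (real x) (real L) q))"
    unfolding KS_alt[of m] sum_distrib_left sum_distrib_right by (intro sum.cong refl) (simp add: algebra_simps)
  also have "\<dots> = (\<Sum>j=0..m. kA m (real L) q j * (\<Sum>x=0..L. real (L choose x) * a ^ x * b ^ (L - x) * pochhammer (- real x) j * kraw_scaled n (real x) (real L) q))"
    unfolding sum_distrib_left by (rule sum.swap)
  also have "\<dots> = 0"
    unfolding q_def KS_moment[OF assms(1,2)] using assms(3) by (intro sum.neutral) (auto simp: KS_same_nat)
  finally show ?thesis unfolding q_def .
qed

lemma UO_eq: assumes "a \<noteq> 0" "a + b \<noteq> 0"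
  shows "(\<Sum>x=0..L. real (L choose x) * a ^ x * b ^ (L - x) * kraw_scaled n (real x) (real L) (a/(a+b)) * kraw_scaled n (real x) (real L) (a/(a+b)))
     = fact n * falling (real L) n * (b/a)^n * (a+b)^L"
proof -
  define q where "q = a/(a+b)"
  have "(\<Sum>x=0..L. real (L choose x) * a ^ x * b ^ (L - x) * kraw_scaled n (real x) (real L) q * kraw_scaled n (real x) (real L) q)
     = (\<Sum>x=0..L. \<Sum>j=0..n. kA n (real L) q j * (real (L choose x) * a ^ x * b ^ (L - x) * pochhammer (- real x) j * kraw_scaled n (real x) (real L) q))"
    unfolding KS_alt[of n _ "real L"] sum_distrib_left sum_distrib_right by (intro sum.cong refl) (simp add: algebra_simps)
  also have "\<dots> = (\<Sum>j=0..n. kA n (real L) q j * (\<Sum>x=0..L. real (L choose x) * a ^ x * b ^ (L - x) * pochhammer (- real x) j * kraw_scaled n (real x) (real L) q))"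
    unfolding sum_distrib_left by (rule sum.swap)
  also have "\<dots> = kA n (real L) q n * (if n \<le> L then (-1)^n * falling (real L) n * a ^ n * (a+b) ^ (L - n) * kraw_scaled n (real n) (real n) q else 0)"
    unfolding q_def KS_moment[OF assms(1,2)]
    by (subst sum.mono_neutral_left[where T="{0..n}" and S="{n}", symmetric]) (auto simp: KS_same_nat)
  also have "\<dots> = fact n * falling (real L) n * (b/a)^n * (a+b)^L"
  proof (cases "n \<le> L")
    case False then show ?thesis by (simp add: falling_nat_zero)
  next
    case True
    have qq: "1 - 1/q = - (b/a)" "1/q = (a+b)/a" unfolding q_def using assms by (simp_all add: field_simps)
    have ab: "(a+b)^L = (a+b)^n * (a+b)^(L-n)" using True by (simp add: power_add[symmetric])
    define u :: real where "u = (-1)^n"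
    have uu: "u * u = 1" unfolding u_def by (simp add: power_mult_distrib[symmetric])
    have kl: "kA n (real L) q n = u * ((a+b)/a)^n" unfolding kA_lead u_def qq(2)[symmetric] by (simp add: power_one_over)
    have ks: "kraw_scaled n (real n) (real n) q = u * fact n * (u * (b/a)^n)"
      unfolding KS_same qq(1) pochhammer_same u_def power_minus[of "b/a"] by (simp only: mult_ac)
    have p1: "((a+b)/a)^n * a^n = (a+b)^n" using assms by (simp add: power_divide)
    have "kA n (real L) q n * ((-1)^n * falling (real L) n * a ^ n * (a+b) ^ (L - n) * kraw_scaled n (real n) (real n) q)
      = (u * u) * (u * u) * (((a+b)/a)^n * a^n) * fact n * falling (real L) n * (b/a)^n * (a+b)^(L-n)"
      unfolding kl ks u_def[symmetric] by (simp only: mult_ac)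
    also have "\<dots> = fact n * falling (real L) n * (b/a)^n * (a+b)^L"
      unfolding uu p1 ab by (simp only: mult_ac mult_1_left)
    finally show ?thesis using True by simp
  qed
  finally show ?thesis unfolding q_def .
qed



definition vcons :: "nat \<Rightarrow> (nat \<Rightarrow> nat) \<Rightarrow> nat \<Rightarrow> nat" where
  "vcons a v = (\<lambda>i. if i = 0 then 0 else if i = 1 then a else v (i - 1))"
definition vtail :: "(nat \<Rightarrow> 'b::zero) \<Rightarrow> nat \<Rightarrow> 'b" where "vtail x = (\<lambda>i. if i = 0 then 0 else x (Suc i))"
definition ptail :: "(nat \<Rightarrow> real) \<Rightarrow> nat \<Rightarrow> real" where "ptail p = (\<lambda>i. p (Suc i))"
definition supp :: "nat \<Rightarrow> (nat \<Rightarrow> nat) \<Rightarrow> bool" where "supp d x \<longleftrightarrow> (\<forall>i. i \<notin> {1..d} \<longrightarrow> x i = 0)"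

lemma states_def2: "states d N = {x. supp d x \<and> (\<Sum>i=1..d. x i) = N}"
  unfolding states_def supp_def by simp

lemma sum1_Suc: "(\<Sum>i=1..Suc d. f i) = f 1 + (\<Sum>i=1..d. f (Suc i))"
proof -
  have "(\<Sum>i=1..Suc d. f i) = f 1 + (\<Sum>i=Suc 1..Suc d. f i)" by (subst sum.atLeast_Suc_atMost) auto
  also have "(\<Sum>i=Suc 1..Suc d. f i) = (\<Sum>i=1..d. f (Suc i))" by (rule sum.shift_bounds_cl_Suc_ivl)
  finally show ?thesis .
qed

lemma prod1_Suc: "(\<Prod>i=1..Suc d. f i) = f 1 * (\<Prod>i=1..d. f (Suc i))"
proof -
  have "(\<Prod>i=1..Suc d. f i) = f 1 * (\<Prod>i=Suc 1..Suc d. f i)" by (subst prod.atLeast_Suc_atMost) auto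
  also have "(\<Prod>i=Suc 1..Suc d. f i) = (\<Prod>i=1..d. f (Suc i))" by (rule prod.shift_bounds_cl_Suc_ivl)
  finally show ?thesis .
qed

lemma vcons_simps[simp]: "vcons a v 0 = 0" "vcons a v (Suc 0) = a" "vcons a v (Suc (Suc i)) = v (Suc i)"
  unfolding vcons_def by auto

lemma vtail_simps[simp]: "vtail x 0 = 0" "vtail x (Suc i) = x (Suc (Suc i))"
  unfolding vtail_def by auto

lemma vtail_vcons: "v 0 = 0 \<Longrightarrow> vtail (vcons a v) = v"
  unfolding vtail_def vcons_def by auto

lemma vcons_vtail: "x 0 = 0 \<Longrightarrow> vcons (x 1) (vtail x) = x"
  unfolding vtail_def vcons_def by (auto simp: fun_eq_iff)

lemma sum_vcons: "(\<Sum>i=1..Suc d. vcons a v i) = a + (\<Sum>i=1..d. v i)"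
  unfolding sum1_Suc by (simp add: vcons_def)

lemma supp_vcons: assumes "v 0 = 0" shows "supp (Suc d) (vcons a v) \<longleftrightarrow> supp d v"
proof
  assume h: "supp (Suc d) (vcons a v)"
  show "supp d v" unfolding supp_def
  proof (intro allI impI)
    fix i assume i: "i \<notin> {1..d}"
    show "v i = 0"
    proof (cases i)
      case 0 then show ?thesis using assms by simp
    next
      case (Suc j)
      then have "Suc i \<notin> {1..Suc d}" using i by auto
      then have "vcons a v (Suc i) = 0" using h unfolding supp_def by blast
      then show ?thesis using Suc by simp
    qed
  qed
next
  assume h: "supp d v"
  show "supp (Suc d) (vcons a v)" unfolding supp_def
  proof (intro allI impI)
    fix i assume i: "i \<notin> {1..Suc d}"
    show "vcons a v i = 0"
    proof (cases i)
      case 0 then show ?thesis by simp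
    next
      case (Suc j)
      then obtain k where k: "j = Suc k" using i by (cases j) auto
      then have "Suc k \<notin> {1..d}" using i Suc by auto
      then show ?thesis using h Suc k unfolding supp_def by simp
    qed
  qed
qed

lemma supp0: "supp d x \<Longrightarrow> x 0 = 0" unfolding supp_def by auto

lemma vcons_states: "v 0 = 0 \<Longrightarrow> vcons a v \<in> states (Suc d) N \<longleftrightarrow> a \<le> N \<and> v \<in> states d (N - a)"
  unfolding states_def2 using supp_vcons[where v=v and d=d and a=a] sum_vcons[where d=d and a=a and v=v] by auto

lemma states_vtail: "x \<in> states (Suc d) N \<Longrightarrow> x 1 \<le> N \<and> vtail x \<in> states d (N - x 1)"
  using vcons_states[where v="vtail x" and a="x 1" and d=d and N=N] vcons_vtail[of x] supp0[of "Suc d" x]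
  by (simp add: states_def2)

lemma states_Suc_eq: "states (Suc d) N = (\<lambda>(a,v). vcons a v) ` (SIGMA a:{0..N}. states d (N - a))"
proof (rule Set.set_eqI, rule iffI)
  fix x assume x: "x \<in> states (Suc d) N"
  then have "x = vcons (x 1) (vtail x)" using vcons_vtail supp0 by (auto simp: states_def2)
  then show "x \<in> (\<lambda>(a,v). vcons a v) ` (SIGMA a:{0..N}. states d (N - a))"
    using states_vtail[OF x] by (intro image_eqI[of _ _ "(x 1, vtail x)"]) auto
next
  fix x assume "x \<in> (\<lambda>(a,v). vcons a v) ` (SIGMA a:{0..N}. states d (N - a))"
  then obtain a v where "x = vcons a v" "a \<le> N" "v \<in> states d (N - a)" by auto
  then show "x \<in> states (Suc d) N" using vcons_states[where v=v and a=a and d=d and N=N] supp0 by (auto simp: states_def2)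
qed

lemma states_0: "states 0 N = (if N = 0 then {\<lambda>_. 0} else {})"
  unfolding states_def by auto

lemma finite_states: "finite (states d N)"
proof (induction d arbitrary: N)
  case 0 then show ?case by (simp add: states_0)
next
  case (Suc d) then show ?case unfolding states_Suc_eq by auto
qed

lemma inj_vcons: "inj_on (\<lambda>(a,v). vcons a v) (SIGMA a:A. states d (N a))"
proof (rule inj_onI, clarify)
  fix a v b w assume "v \<in> states d (N a)" "w \<in> states d (N b)" and eq: "vcons a v = vcons b w"
  then have "v 0 = 0" "w 0 = 0" by (auto simp: states_def2 supp0)
  then show "a = b \<and> v = w" using eq vtail_vcons by (metis vcons_simps(2))
qed

lemma sum_states_Suc: "(\<Sum>x\<in>states (Suc d) N. f x) = (\<Sum>a=0..N. \<Sum>v\<in>states d (N - a). f (vcons a v))"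
  unfolding states_Suc_eq
  by (subst sum.reindex[OF inj_vcons]) (simp add: sum.Sigma finite_states split_def)



definition Pr :: "nat \<Rightarrow> real \<Rightarrow> (nat \<Rightarrow> real) \<Rightarrow> (nat \<Rightarrow> nat) \<Rightarrow> (nat \<Rightarrow> nat) \<Rightarrow> real" where
 "Pr d L p n x = (\<Prod>j=1..d-1. kraw_scaled (n j) (real (x j))
     (L - real (\<Sum>i\<in>{1..<j}. x i) - real (\<Sum>i\<in>{j+1..d-1}. n i)) (p j / (\<Sum>i=j..d. p i)))"

lemma mkraw_Pr: "mkraw d N p n x = (-1)^(\<Sum>i=1..d-1. n i) / falling (real N) (\<Sum>i=1..d-1. n i) * Pr d (real N) p n x"
  unfolding mkraw_def Pr_def by simp

lemma vtail_pos: "1 \<le> i \<Longrightarrow> vtail x i = x (Suc i)"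
  unfolding vtail_def by simp

lemma sum_vtail_shift: "(\<Sum>i=Suc a..Suc b. x i) = (\<Sum>i=a..b. vtail x i)" if "1 \<le> a"
  using that by (subst sum.shift_bounds_cl_Suc_ivl) (auto intro!: sum.cong simp: vtail_pos)

lemma Pr_rec: "Pr (Suc (Suc e)) L p nn x =
   kraw_scaled (nn 1) (real (x 1)) (L - real (\<Sum>i=1..e. vtail nn i)) (p 1 / (\<Sum>i=1..Suc (Suc e). p i))
   * Pr (Suc e) (L - real (x 1)) (ptail p) (vtail nn) (vtail x)"
proof -
  have "Pr (Suc (Suc e)) L p nn x = (\<Prod>j=1..Suc e. kraw_scaled (nn j) (real (x j))
     (L - real (\<Sum>i\<in>{1..<j}. x i) - real (\<Sum>i\<in>{j+1..Suc e}. nn i)) (p j / (\<Sum>i=j..Suc (Suc e). p i)))"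
    unfolding Pr_def by simp
  also have "\<dots> = kraw_scaled (nn 1) (real (x 1)) (L - real (\<Sum>i=1..e. vtail nn i)) (p 1 / (\<Sum>i=1..Suc (Suc e). p i))
    * (\<Prod>j=1..e. kraw_scaled (nn (Suc j)) (real (x (Suc j)))
     (L - real (\<Sum>i\<in>{1..<Suc j}. x i) - real (\<Sum>i\<in>{Suc j+1..Suc e}. nn i)) (p (Suc j) / (\<Sum>i=Suc j..Suc (Suc e). p i)))"
    unfolding prod1_Suc using sum_vtail_shift[of 1 nn e] by simp
  also have "(\<Prod>j=1..e. kraw_scaled (nn (Suc j)) (real (x (Suc j)))
     (L - real (\<Sum>i\<in>{1..<Suc j}. x i) - real (\<Sum>i\<in>{Suc j+1..Suc e}. nn i)) (p (Suc j) / (\<Sum>i=Suc j..Suc (Suc e). p i)))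
     = Pr (Suc e) (L - real (x 1)) (ptail p) (vtail nn) (vtail x)"
    unfolding Pr_def
  proof (rule prod.cong)
    show "{1..e} = {1..Suc e - 1}" by simp
  next
    fix j assume j: "j \<in> {1..Suc e - 1}"
    have s1: "(\<Sum>i\<in>{1..<Suc j}. x i) = x 1 + (\<Sum>i\<in>{1..<j}. vtail x i)"
    proof -
      have "(\<Sum>i\<in>{1..<Suc j}. x i) = x 1 + (\<Sum>i\<in>{Suc 1..<Suc j}. x i)"
        using j by (subst sum.atLeast_Suc_lessThan) auto
      also have "(\<Sum>i\<in>{Suc 1..<Suc j}. x i) = (\<Sum>i\<in>{1..<j}. vtail x i)"
        by (subst sum.atLeast_Suc_lessThan_Suc_shift) (auto intro!: sum.cong simp: vtail_pos)
      finally show ?thesis .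
    qed
    have s2: "(\<Sum>i\<in>{Suc j+1..Suc e}. nn i) = (\<Sum>i\<in>{j+1..Suc e - 1}. vtail nn i)"
      using sum_vtail_shift[of "j+1" nn e] by simp
    have s3: "(\<Sum>i=Suc j..Suc (Suc e). p i) = (\<Sum>i=j..Suc e. ptail p i)"
      unfolding ptail_def by (rule sum.shift_bounds_cl_Suc_ivl)
    show "kraw_scaled (nn (Suc j)) (real (x (Suc j)))
     (L - real (\<Sum>i\<in>{1..<Suc j}. x i) - real (\<Sum>i\<in>{Suc j+1..Suc e}. nn i)) (p (Suc j) / (\<Sum>i=Suc j..Suc (Suc e). p i))
      = kraw_scaled (vtail nn j) (real (vtail x j))
          (L - real (x 1) - real (\<Sum>i\<in>{1..<j}. vtail x i) - real (\<Sum>i\<in>{j+1..Suc e - 1}. vtail nn i))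
          (ptail p j / (\<Sum>i=j..Suc e. ptail p i))"
      unfolding s1 s2 s3 using j by (simp add: vtail_pos ptail_def diff_diff_eq)
  qed
  finally show ?thesis .
qed

lemma Pr_1: "Pr (Suc 0) L p nn x = 1"
  unfolding Pr_def by simp

lemma multinom_vcons: assumes "a \<le> N" "v \<in> states d (N - a)"
  shows "multinom (Suc d) N p (vcons a v) = real (N choose a) * p 1 ^ a * multinom d (N - a) (ptail p) v"
proof -
  have "(\<Prod>i=1..Suc d. fact (vcons a v i) :: real) = fact a * (\<Prod>i=1..d. fact (v i))"
    unfolding prod1_Suc by (auto intro!: prod.cong arg_cong[where f="\<lambda>t. _ * t"] simp: vcons_def)
  moreover have "(\<Prod>i=1..Suc d. p i ^ vcons a v i) = p 1 ^ a * (\<Prod>i=1..d. ptail p i ^ v i)"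
    unfolding prod1_Suc by (auto intro!: prod.cong arg_cong[where f="\<lambda>t. _ * t"] simp: vcons_def ptail_def)
  moreover have "real (N choose a) = fact N / (fact a * fact (N - a))" using assms(1) by (rule binomial_fact)
  ultimately show ?thesis unfolding multinom_def by (simp add: field_simps)
qed



lemma states_1: "states (Suc 0) s = {vcons s (\<lambda>_. 0)}"
proof -
  have "(SIGMA a:{0..s}. states 0 (s - a)) = {(s, \<lambda>_. 0)}"
    by (auto simp: states_0 split: if_splits)
  then show ?thesis unfolding states_Suc_eq by simp
qed

lemma multinom_1: "multinom (Suc 0) s p (vcons s (\<lambda>_. 0)) = p 1 ^ s"
  using multinom_vcons[of s s "\<lambda>_. 0" 0 p] by (simp add: states_0 multinom_def)

lemma vtail_add: "v 0 = 0 \<Longrightarrow> vtail (\<lambda>i. z i + vcons a v i) = (\<lambda>i. vtail z i + v i)"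
  unfolding vtail_def vcons_def by auto

lemma ptail_pos: "\<forall>i\<in>{1..Suc (Suc e)}. p i > 0 \<Longrightarrow> \<forall>i\<in>{1..Suc e}. ptail p i > 0"
  unfolding ptail_def by auto

lemma sum_p_split: "(\<Sum>i=1..Suc (Suc e). p i) = p 1 + (\<Sum>i=1..Suc e. ptail p i)"
  unfolding sum1_Suc[where d="Suc e"] ptail_def by simp

lemma MU: assumes "\<forall>i\<in>{1..Suc e}. p i > 0"
  shows "(\<Sum>m\<in>states (Suc e) s. multinom (Suc e) s p m * Pr (Suc e) L p nn (\<lambda>i. z i + m i))
       = (\<Sum>i=1..Suc e. p i) ^ s * Pr (Suc e) (L - real s) p nn z"
  using assms
proof (induction e arbitrary: p L nn z s)
  case 0
  then show ?case by (simp add: states_1 multinom_1 Pr_1)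
next
  case (Suc e)
  define S' where "S' = (\<Sum>i=1..Suc e. ptail p i)"
  define NN where "NN = real (\<Sum>i=1..e. vtail nn i)"
  define q where "q = p 1 / (\<Sum>i=1..Suc (Suc e). p i)"
  have Sq: "(\<Sum>i=1..Suc (Suc e). p i) = p 1 + S'" unfolding S'_def by (rule sum_p_split)
  have p1: "p 1 \<noteq> 0" using bspec[OF Suc.prems, of 1] by simp
  have S'pos: "S' > 0" unfolding S'_def using Suc.prems by (intro sum_pos) (auto simp: ptail_def)
  have "(\<Sum>m\<in>states (Suc (Suc e)) s. multinom (Suc (Suc e)) s p m * Pr (Suc (Suc e)) L p nn (\<lambda>i. z i + m i))
     = (\<Sum>a=0..s. \<Sum>v\<in>states (Suc e) (s - a). multinom (Suc (Suc e)) s p (vcons a v) * Pr (Suc (Suc e)) L p nn (\<lambda>i. z i + vcons a v i))"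
    by (rule sum_states_Suc)
  also have "\<dots> = (\<Sum>a=0..s. real (s choose a) * p 1 ^ a * kraw_scaled (nn 1) (real (z 1) + real a) (L - NN) q *
        (\<Sum>v\<in>states (Suc e) (s - a). multinom (Suc e) (s - a) (ptail p) v * Pr (Suc e) (L - real (z 1 + a)) (ptail p) (vtail nn) (\<lambda>i. vtail z i + v i)))"
  proof (intro sum.cong refl)
    fix a assume a: "a \<in> {0..s}"
    then have a_le: "a \<le> s" by simp
    show "(\<Sum>v\<in>states (Suc e) (s - a). multinom (Suc (Suc e)) s p (vcons a v) * Pr (Suc (Suc e)) L p nn (\<lambda>i. z i + vcons a v i))
      = real (s choose a) * p 1 ^ a * kraw_scaled (nn 1) (real (z 1) + real a) (L - NN) q *
        (\<Sum>v\<in>states (Suc e) (s - a). multinom (Suc e) (s - a) (ptail p) v * Pr (Suc e) (L - real (z 1 + a)) (ptail p) (vtail nn) (\<lambda>i. vtail z i + v i))"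
      unfolding sum_distrib_left
    proof (intro sum.cong refl)
      fix v assume v: "v \<in> states (Suc e) (s - a)"
      then have v0: "v 0 = 0" by (auto simp: states_def2 supp0)
      show "multinom (Suc (Suc e)) s p (vcons a v) * Pr (Suc (Suc e)) L p nn (\<lambda>i. z i + vcons a v i)
        = real (s choose a) * p 1 ^ a * kraw_scaled (nn 1) (real (z 1) + real a) (L - NN) q *
          (multinom (Suc e) (s - a) (ptail p) v * Pr (Suc e) (L - real (z 1 + a)) (ptail p) (vtail nn) (\<lambda>i. vtail z i + v i))"
        unfolding multinom_vcons[OF a_le v] Pr_rec vtail_add[where v=v, OF v0] NN_def q_def using a by (simp add: mult_ac)
    qed
  qed
  also have "\<dots> = (\<Sum>a=0..s. real (s choose a) * p 1 ^ a * S' ^ (s - a) * kraw_scaled (nn 1) (real (z 1) + real a) (L - NN) q) *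
      Pr (Suc e) (L - real s - real (z 1)) (ptail p) (vtail nn) (vtail z)"
    unfolding sum_distrib_right
  proof (intro sum.cong refl)
    fix a assume a: "a \<in> {0..s}"
    have eq: "L - real (z 1 + a) - real (s - a) = L - real s - real (z 1)" using a by (simp add: of_nat_diff)
    then show "real (s choose a) * p 1 ^ a * kraw_scaled (nn 1) (real (z 1) + real a) (L - NN) q *
        (\<Sum>v\<in>states (Suc e) (s - a). multinom (Suc e) (s - a) (ptail p) v * Pr (Suc e) (L - real (z 1 + a)) (ptail p) (vtail nn) (\<lambda>i. vtail z i + v i))
      = real (s choose a) * p 1 ^ a * S' ^ (s - a) * kraw_scaled (nn 1) (real (z 1) + real a) (L - NN) q *
      Pr (Suc e) (L - real s - real (z 1)) (ptail p) (vtail nn) (vtail z)"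
      unfolding Suc.IH[OF ptail_pos[OF Suc.prems]] S'_def eq by (simp only: mult_ac)
  qed
  also have "(\<Sum>a=0..s. real (s choose a) * p 1 ^ a * S' ^ (s - a) * kraw_scaled (nn 1) (real (z 1) + real a) (L - NN) q)
     = (p 1 + S') ^ s * kraw_scaled (nn 1) (real (z 1)) (L - NN - real s) q"
  proof -
    have "p 1 > 0" using bspec[OF Suc.prems, of 1] by simp
    then have "p 1 + S' \<noteq> 0" using S'pos by simp
    then show ?thesis unfolding q_def Sq using U1[of "p 1" S' s "nn 1" "real (z 1)" "L - NN"] p1 by simp
  qed
  also have "(p 1 + S') ^ s * kraw_scaled (nn 1) (real (z 1)) (L - NN - real s) q *
      Pr (Suc e) (L - real s - real (z 1)) (ptail p) (vtail nn) (vtail z)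
     = (\<Sum>i=1..Suc (Suc e). p i) ^ s * Pr (Suc (Suc e)) (L - real s) p nn z"
    unfolding Pr_rec[of e "L - real s"] Sq NN_def q_def by (simp add: algebra_simps)
  finally show ?case .
qed



lemma falling_add: "falling x (m + n) = falling x m * falling (x - real m) n"
  by (induction n) (simp_all add: falling_def algebra_simps)

lemma choose_falling2: assumes "a \<le> L"
  shows "real (L choose a) * falling (real (L - a)) m = falling (real L) m * real ((L - m) choose a)"
proof (cases "m \<le> L - a")
  case True
  have "real (L choose (L - a)) * falling (real (L - a)) m = falling (real L) m * real ((L - m) choose (L - a - m))"
    using choose_falling[of m "L - a" L] True by simp
  moreover have "L choose (L - a) = L choose a" using assms by (simp add: binomial_symmetric[symmetric])
  moreover have "(L - m) choose (L - a - m) = (L - m) choose a"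
  proof -
    have "L - a - m = (L - m) - a" by simp
    moreover have "a \<le> L - m" using True assms by simp
    ultimately show ?thesis using binomial_symmetric[of a "L - m"] by simp
  qed
  ultimately show ?thesis by simp
next
  case False
  then have z: "falling (real (L - a)) m = 0" by (intro falling_nat_zero) simp
  show ?thesis
  proof (cases "m \<le> L")
    case True
    then have "(L - m) choose a = 0" using False by simp
    then show ?thesis using z by simp
  next
    case False
    then show ?thesis using z falling_nat_zero[of L m] by simp
  qed
qed

lemma supp_vtail: "supp (Suc e) nn \<Longrightarrow> supp e (vtail nn)"
  using supp_vcons[of "vtail nn" e "nn 1"] vcons_vtail[of nn] supp0[of "Suc e" nn] by simp

lemma eq_vtail: "supp (Suc e) nn \<Longrightarrow> supp (Suc e) mm \<Longrightarrow> nn = mm \<longleftrightarrow> nn 1 = mm 1 \<and> vtail nn = vtail mm"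
  using vcons_vtail[of nn] vcons_vtail[of mm] supp0[of "Suc e" nn] supp0[of "Suc e" mm] by metis

lemma sum_nn_split: "(\<Sum>i=1..Suc e. nn i) = nn 1 + (\<Sum>i=1..e. vtail nn i)"
  unfolding sum1_Suc by (auto intro!: sum.cong simp: vtail_pos)

lemma supp_zero: "supp 0 nn \<Longrightarrow> nn = (\<lambda>_. 0)"
  unfolding supp_def by auto

definition NS :: "nat \<Rightarrow> nat \<Rightarrow> (nat \<Rightarrow> real) \<Rightarrow> (nat \<Rightarrow> nat) \<Rightarrow> (nat \<Rightarrow> nat) \<Rightarrow> real" where
  "NS d L p nn mm = (\<Sum>x\<in>states d L. multinom d L p x * Pr d (real L) p nn x * Pr d (real L) p mm x)"



lemma NS_rec: "NS (Suc (Suc e)) L p nn mm = (\<Sum>a=0..L. real (L choose a) * p 1 ^ a *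
     kraw_scaled (nn 1) (real a) (real L - real (\<Sum>i=1..e. vtail nn i)) (p 1 / (\<Sum>i=1..Suc (Suc e). p i)) *
     kraw_scaled (mm 1) (real a) (real L - real (\<Sum>i=1..e. vtail mm i)) (p 1 / (\<Sum>i=1..Suc (Suc e). p i)) *
     NS (Suc e) (L - a) (ptail p) (vtail nn) (vtail mm))"
  unfolding NS_def sum_states_Suc[where d="Suc e" and N=L] sum_distrib_left
proof (intro sum.cong refl, goal_cases)
  case (1 a v)
  then have v: "v \<in> states (Suc e) (L - a)" and aL: "a \<le> L" by auto
  then have v0: "v 0 = 0" by (auto simp: states_def2 supp0)
  show ?case
    using aL unfolding multinom_vcons[OF aL v] Pr_rec vtail_vcons[where v=v, OF v0] by (simp add: mult_ac of_nat_diff)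
qed

lemma MO: assumes "\<forall>i\<in>{1..Suc e}. p i > 0" "supp e nn" "supp e mm"
  shows "\<exists>c>0. ((\<forall>i. nn i = 0) \<longrightarrow> c = 1) \<and>
     (\<forall>L. NS (Suc e) L p nn mm = (if nn = mm then c * falling (real L) (\<Sum>i=1..e. nn i) * (\<Sum>i=1..Suc e. p i) ^ L else 0))"
  using assms
proof (induction e arbitrary: p nn mm)
  case 0
  then have "nn = (\<lambda>_. 0)" "mm = (\<lambda>_. 0)" by (auto intro: supp_zero)
  then show ?case by (intro exI[of _ 1]) (simp add: NS_def states_1 multinom_1 Pr_1 falling_def)
next
  case (Suc e)
  define S' where "S' = (\<Sum>i=1..Suc e. ptail p i)"
  define S where "S = (\<Sum>i=1..Suc (Suc e). p i)"
  define q where "q = p 1 / S"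
  have Sq: "S = p 1 + S'" unfolding S'_def S_def by (rule sum_p_split)
  have p1: "p 1 > 0" using bspec[OF Suc.prems(1), of 1] by simp
  have S'pos: "S' > 0" unfolding S'_def using Suc.prems by (intro sum_pos) (auto simp: ptail_def)
  have Spos: "S > 0" using Sq p1 S'pos by simp
  have qq: "q = p 1 / (p 1 + S')" unfolding q_def Sq ..
  have tn: "supp e (vtail nn)" and tm: "supp e (vtail mm)" using Suc.prems supp_vtail by auto
  obtain c' where c': "c' > 0" "(\<forall>i. vtail nn i = 0) \<longrightarrow> c' = 1"
    "\<And>L. NS (Suc e) L (ptail p) (vtail nn) (vtail mm) = (if vtail nn = vtail mm then c' * falling (real L) (\<Sum>i=1..e. vtail nn i) * S' ^ L else 0)"
    using Suc.IH[OF ptail_pos[OF Suc.prems(1)] tn tm] unfolding S'_def by blast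
  define m where "m = (\<Sum>i=1..e. vtail nn i)"
  define n1 where "n1 = nn 1"
  define c where "c = (if vtail nn = vtail mm then c' * fact n1 * (S'/p 1)^n1 * (S'/S)^m else 1)"
  have cpos: "c > 0" unfolding c_def using c' p1 S'pos Spos by simp
  have sn: "(\<Sum>i=1..Suc e. nn i) = n1 + m" unfolding sum_nn_split m_def n1_def ..
  have c1: "(\<forall>i. nn i = 0) \<longrightarrow> c = 1"
  proof
    assume z: "\<forall>i. nn i = 0"
    then have "vtail nn = (\<lambda>_. 0)" unfolding vtail_def by auto
    show "c = 1"
    proof (cases "vtail nn = vtail mm")
      case True
      have "\<forall>i. vtail nn i = 0" using z unfolding vtail_def by auto
      then have "c' = 1" "m = 0" "n1 = 0" using c' z unfolding m_def n1_def by auto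
      then show ?thesis unfolding c_def using True by simp
    qed (simp add: c_def)
  qed
  have main: "NS (Suc (Suc e)) L p nn mm = (if nn = mm then c * falling (real L) (\<Sum>i=1..Suc e. nn i) * S ^ L else 0)" for L
  proof (cases "vtail nn = vtail mm")
    case False
    then have "nn \<noteq> mm" by auto
    then show ?thesis unfolding NS_rec c'(3) using False by simp
  next
    case tt: True
    then have mm_m: "(\<Sum>i=1..e. vtail mm i) = m" unfolding m_def by simp
    have eqv: "nn = mm \<longleftrightarrow> nn 1 = mm 1" using eq_vtail[OF Suc.prems(2,3)] tt by simp
    define F where "F a = p 1 ^ a * kraw_scaled (nn 1) (real a) (real L - real m) q * kraw_scaled (mm 1) (real a) (real L - real m) q" for a
    have "NS (Suc (Suc e)) L p nn mm = c' * (\<Sum>a=0..L. real (L choose a) * falling (real (L - a)) m * S' ^ (L - a) * F a)"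
      unfolding NS_rec c'(3) mm_m sum_distrib_left F_def using tt
      by (intro sum.cong refl) (simp add: m_def q_def S_def mult_ac)
    also have "\<dots> = c' * (\<Sum>a=0..L. falling (real L) m * real ((L - m) choose a) * S' ^ (L - a) * F a)"
    proof (intro arg_cong[where f="\<lambda>t. c' * t"] sum.cong refl)
      fix a assume "a \<in> {0..L}"
      then have "a \<le> L" by simp
      from choose_falling2[OF this, of m]
      show "real (L choose a) * falling (real (L - a)) m * S' ^ (L - a) * F a = falling (real L) m * real ((L - m) choose a) * S' ^ (L - a) * F a"
        by (simp only: mult.assoc[symmetric])
    qed
    also have "\<dots> = (if nn = mm then c * falling (real L) (\<Sum>i=1..Suc e. nn i) * S ^ L else 0)"
    proof (cases "m \<le> L")
      case False
      then have "falling (real L) m = 0" "falling (real L) (n1 + m) = 0" by (simp_all add: falling_nat_zero)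
      then show ?thesis unfolding sn by simp
    next
      case mL: True
      have "(\<Sum>a=0..L. falling (real L) m * real ((L - m) choose a) * S' ^ (L - a) * F a)
         = (\<Sum>a=0..L-m. falling (real L) m * real ((L - m) choose a) * S' ^ (L - a) * F a)"
        by (rule sum.mono_neutral_right) auto
      also have "\<dots> = falling (real L) m * S' ^ m * (\<Sum>a=0..L-m. real ((L - m) choose a) * p 1 ^ a * S' ^ ((L - m) - a) *
           kraw_scaled (nn 1) (real a) (real (L - m)) (p 1 / (p 1 + S')) * kraw_scaled (mm 1) (real a) (real (L - m)) (p 1 / (p 1 + S')))"
        unfolding sum_distrib_left
      proof (intro sum.cong refl)
        fix a assume a: "a \<in> {0..L-m}"
        have e1: "S' ^ (L - a) = S' ^ m * S' ^ ((L - m) - a)" using a mL by (simp add: power_add[symmetric])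
        have e2: "real L - real m = real (L - m)" using mL by (simp add: of_nat_diff)
        show "falling (real L) m * real ((L - m) choose a) * S' ^ (L - a) * F a =
          falling (real L) m * S' ^ m * (real ((L - m) choose a) * p 1 ^ a * S' ^ ((L - m) - a) *
           kraw_scaled (nn 1) (real a) (real (L - m)) (p 1 / (p 1 + S')) * kraw_scaled (mm 1) (real a) (real (L - m)) (p 1 / (p 1 + S')))"
          unfolding F_def qq e1 e2 by (simp only: mult_ac)
      qed
      also have "\<dots> = (if nn = mm then falling (real L) m * S' ^ m * (fact n1 * falling (real (L - m)) n1 * (S'/p 1)^n1 * (p 1 + S')^(L - m)) else 0)"
      proof (cases "nn 1 = mm 1")
        case True
        then show ?thesis using eqv UO_eq[of "p 1" S' "L - m" "nn 1"] p1 S'pos unfolding n1_def by simp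
      next
        case False
        then have "nn 1 < mm 1 \<or> mm 1 < nn 1" by auto
        then show ?thesis using False eqv UO_lt[of "p 1" S' "nn 1" "mm 1" "L - m"] UO_lt[of "p 1" S' "mm 1" "nn 1" "L - m"] p1 S'pos
          by (auto simp: mult_ac)
      qed
      finally have A: "(\<Sum>a=0..L. falling (real L) m * real ((L - m) choose a) * S' ^ (L - a) * F a)
         = (if nn = mm then falling (real L) m * S' ^ m * (fact n1 * falling (real (L - m)) n1 * (S'/p 1)^n1 * (p 1 + S')^(L - m)) else 0)" .
      show ?thesis unfolding A
      proof (cases "nn = mm")
        case True
        have fa: "falling (real L) (n1 + m) = falling (real L) m * falling (real (L - m)) n1"
          using falling_add[of "real L" m n1] mL by (simp add: of_nat_diff add.commute)
        have SL: "S ^ L = S ^ m * S ^ (L - m)" using mL by (simp add: power_add[symmetric])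
        have "S' ^ m = (S'/S)^m * S^m" using Spos by (simp add: power_divide)
        then show "c' * (if nn = mm then falling (real L) m * S' ^ m * (fact n1 * falling (real (L - m)) n1 * (S'/p 1)^n1 * (p 1 + S')^(L - m)) else 0)
          = (if nn = mm then c * falling (real L) (\<Sum>i=1..Suc e. nn i) * S ^ L else 0)"
          using True unfolding sn fa SL c_def Sq[symmetric]
          by (simp add: tt mult_ac)
      qed simp
    qed
    finally show ?thesis .
  qed
  show ?case using cpos c1 main unfolding S_def by blast
qed



lemma card_states: "card (states (Suc e) n) = (e + n) choose n"
proof (induction e arbitrary: n)
  case 0 then show ?case by (simp add: states_1)
next
  case (Suc e)
  have "card (states (Suc (Suc e)) n) = card (SIGMA a:{0..n}. states (Suc e) (n - a))"
    unfolding states_Suc_eq[where d="Suc e" and N=n] by (rule card_image[OF inj_vcons])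
  also have "\<dots> = (\<Sum>a=0..n. (e + (n - a)) choose (n - a))"
    by (simp add: finite_states Suc.IH)
  also have "\<dots> = (\<Sum>k=0..n. (e + k) choose k)"
    by (subst sum.atLeastAtMost_rev) simp
  also have "\<dots> = Suc (e + n) choose n" using sum_choose_lower[of e n] by (simp add: atLeast0AtMost)
  finally show ?case by simp
qed

definition Idx :: "nat \<Rightarrow> nat \<Rightarrow> (nat \<Rightarrow> nat) set" where
  "Idx e N = (\<Union>n\<in>{0..N}. states e n)"

lemma states_disjoint: "n \<noteq> n' \<Longrightarrow> states e n \<inter> states e n' = {}"
  unfolding states_def by auto

lemma finite_Idx: "finite (Idx e N)"
  unfolding Idx_def by (simp add: finite_states)

lemma card_Idx: "card (Idx (Suc e) N) = card (states (Suc (Suc e)) N)"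
proof -
  have "card (Idx (Suc e) N) = (\<Sum>n=0..N. card (states (Suc e) n))"
    unfolding Idx_def by (rule card_UN_disjoint) (auto simp: finite_states states_disjoint)
  also have "\<dots> = (\<Sum>n\<le>N. (e + n) choose n)" by (simp add: card_states atLeast0AtMost)
  also have "\<dots> = card (states (Suc (Suc e)) N)" by (simp add: sum_choose_lower card_states)
  finally show ?thesis .
qed

lemma sum_states: "x \<in> states d N \<Longrightarrow> (\<Sum>i=1..d. x i) = N" unfolding states_def by auto
lemma supp_states: "x \<in> states d N \<Longrightarrow> i \<notin> {1..d} \<Longrightarrow> x i = 0" unfolding states_def by auto

lemma diff_states: assumes "x \<in> states d N" "k \<in> states d s" "\<forall>i. k i \<le> x i"
  shows "(\<lambda>i. x i - k i) \<in> states d (N - s)"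
proof -
  have "(\<Sum>i=1..d. x i - k i) = (\<Sum>i=1..d. x i) - (\<Sum>i=1..d. k i)"
    using assms(3) by (intro sum_subtractf_nat) auto
  then show ?thesis using assms unfolding states_def by auto
qed

lemma add_states: assumes "z \<in> states d t" "m \<in> states d s"
  shows "(\<lambda>i. z i + m i) \<in> states d (t + s)"
  using assms unfolding states_def by (auto simp: sum.distrib)

lemma multinom_H: assumes x: "x \<in> states d N" and k: "k \<in> states d s" and kx: "\<forall>i. k i \<le> x i" and sN: "s \<le> N"
  shows "multinom d N p x * (\<Prod>i=1..d. real (x i choose k i)) / real (N choose s)
       = multinom d (N - s) p (\<lambda>i. x i - k i) * multinom d s p k"
proof -
  have h1: "(\<Prod>i=1..d. real (x i choose k i)) = (\<Prod>i=1..d. fact (x i)) / ((\<Prod>i=1..d. fact (k i)) * (\<Prod>i=1..d. fact (x i - k i)))"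
    using kx by (simp add: binomial_fact prod_dividef prod.distrib)
  have h2: "(\<Prod>i=1..d. p i ^ x i) = (\<Prod>i=1..d. p i ^ (x i - k i)) * (\<Prod>i=1..d. p i ^ k i)"
    unfolding prod.distrib[symmetric] using kx by (intro prod.cong refl) (simp add: power_add[symmetric])
  have h3: "real (N choose s) = fact N / (fact s * fact (N - s))" using sN by (rule binomial_fact)
  have nz: "(\<Prod>i=1..d. fact (x i) :: real) \<noteq> 0" "(\<Prod>i=1..d. fact (k i) :: real) \<noteq> 0"
     "(\<Prod>i=1..d. fact (x i - k i) :: real) \<noteq> 0" by auto
  show ?thesis unfolding multinom_def h1 h2 h3 sum_states[OF x] sum_states[OF k]
    using nz by (simp add: field_simps)
qed

lemma K_action: assumes x: "x \<in> states d N" and sN: "s \<le> N"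
  shows "(\<Sum>y\<in>states d N. ehrenfest d N s p x y * f y) =
    (\<Sum>k\<in>states d s. if (\<forall>i. k i \<le> x i) then (\<Prod>i=1..d. real (x i choose k i)) / real (N choose s) *
        (\<Sum>m\<in>states d s. multinom d s p m * f (\<lambda>i. x i - k i + m i)) else 0)"
proof -
  have "(\<Sum>y\<in>states d N. ehrenfest d N s p x y * f y) =
     (\<Sum>y\<in>states d N. \<Sum>k\<in>states d s. \<Sum>m\<in>states d s.
        (if (\<forall>i. k i \<le> x i) \<and> (\<forall>i. x i - k i + m i = y i)
        then (\<Prod>i=1..d. real (x i choose k i)) / real (N choose s) * multinom d s p m
        else 0) * f y)"
    unfolding ehrenfest_def sum_distrib_right ..
  also have "\<dots> = (\<Sum>k\<in>states d s. \<Sum>m\<in>states d s. \<Sum>y\<in>states d N.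
        (if (\<forall>i. k i \<le> x i) \<and> (\<forall>i. x i - k i + m i = y i)
        then (\<Prod>i=1..d. real (x i choose k i)) / real (N choose s) * multinom d s p m
        else 0) * f y)"
    by (subst sum.swap) (subst (2) sum.swap, rule refl)
  also have "\<dots> = (\<Sum>k\<in>states d s. \<Sum>m\<in>states d s. if (\<forall>i. k i \<le> x i) then
        (\<Prod>i=1..d. real (x i choose k i)) / real (N choose s) * multinom d s p m * f (\<lambda>i. x i - k i + m i) else 0)"
  proof (intro sum.cong refl)
    fix k m assume k: "k \<in> states d s" and m: "m \<in> states d s"
    show "(\<Sum>y\<in>states d N.
        (if (\<forall>i. k i \<le> x i) \<and> (\<forall>i. x i - k i + m i = y i)
        then (\<Prod>i=1..d. real (x i choose k i)) / real (N choose s) * multinom d s p m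
        else 0) * f y) = (if (\<forall>i. k i \<le> x i) then
        (\<Prod>i=1..d. real (x i choose k i)) / real (N choose s) * multinom d s p m * f (\<lambda>i. x i - k i + m i) else 0)"
    proof (cases "\<forall>i. k i \<le> x i")
      case True
      have mem: "(\<lambda>i. x i - k i + m i) \<in> states d N"
        using add_states[OF diff_states[OF x k True] m] sN by simp
      have "(\<Sum>y\<in>states d N.
        (if (\<forall>i. k i \<le> x i) \<and> (\<forall>i. x i - k i + m i = y i)
        then (\<Prod>i=1..d. real (x i choose k i)) / real (N choose s) * multinom d s p m
        else 0) * f y) = (\<Sum>y\<in>states d N. if (\<lambda>i. x i - k i + m i) = y then
           (\<Prod>i=1..d. real (x i choose k i)) / real (N choose s) * multinom d s p m * f y else 0)"
        using True by (intro sum.cong refl) (auto simp: fun_eq_iff)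
      also have "\<dots> = (\<Prod>i=1..d. real (x i choose k i)) / real (N choose s) * multinom d s p m * f (\<lambda>i. x i - k i + m i)"
        using mem by (simp add: finite_states)
      finally show ?thesis using True by simp
    next
      case False
      then show ?thesis by (intro trans[OF sum.neutral]) auto
    qed
  qed
  also have "\<dots> = (\<Sum>k\<in>states d s. if (\<forall>i. k i \<le> x i) then (\<Prod>i=1..d. real (x i choose k i)) / real (N choose s) *
        (\<Sum>m\<in>states d s. multinom d s p m * f (\<lambda>i. x i - k i + m i)) else 0)"
  proof (intro sum.cong refl)
    fix k
    show "(\<Sum>m\<in>states d s. if (\<forall>i. k i \<le> x i) then
        (\<Prod>i=1..d. real (x i choose k i)) / real (N choose s) * multinom d s p m * f (\<lambda>i. x i - k i + m i) else 0) =
        (if (\<forall>i. k i \<le> x i) then (\<Prod>i=1..d. real (x i choose k i)) / real (N choose s) *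
        (\<Sum>m\<in>states d s. multinom d s p m * f (\<lambda>i. x i - k i + m i)) else 0)"
    proof (cases "\<forall>i. k i \<le> x i")
      case True then show ?thesis by (simp add: sum_distrib_left mult_ac)
    next
      case False
      then have F: "(\<forall>i. k i \<le> x i) = False" by simp
      show ?thesis unfolding F by simp
    qed
  qed
  finally show ?thesis .
qed



lemma reindex_sub: assumes sN: "s \<le> N"
  shows "(\<Sum>x\<in>states d N. \<Sum>k\<in>states d s. if (\<forall>i. k i \<le> x i) then F x k else (0::real))
       = (\<Sum>z\<in>states d (N - s). \<Sum>k\<in>states d s. F (\<lambda>i. z i + k i) k)"
proof -
  define A where "A = {(x,k). x \<in> states d N \<and> k \<in> states d s \<and> (\<forall>i. k i \<le> x i)}"
  have "(\<Sum>x\<in>states d N. \<Sum>k\<in>states d s. if (\<forall>i. k i \<le> x i) then F x k else (0::real))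
     = (\<Sum>(x,k)\<in>states d N \<times> states d s. if (\<forall>i. k i \<le> x i) then F x k else 0)"
    by (simp add: sum.cartesian_product)
  also have "\<dots> = (\<Sum>(x,k)\<in>A. F x k)"
    unfolding A_def by (rule sum.mono_neutral_cong_right) (auto simp: finite_states split: if_splits)
  also have "\<dots> = (\<Sum>(z,k)\<in>states d (N - s) \<times> states d s. F (\<lambda>i. z i + k i) k)"
  proof (rule sum.reindex_bij_witness[where i="\<lambda>(z,k). (\<lambda>i. z i + k i, k)" and j="\<lambda>(x,k). (\<lambda>i. x i - k i, k)"])
    fix a assume "a \<in> A" then show "(\<lambda>(z,k). (\<lambda>i. z i + k i, k)) ((\<lambda>(x,k). (\<lambda>i. x i - k i, k)) a) = a"
      unfolding A_def by auto
  next
    fix a assume "a \<in> A" then show "(\<lambda>(x,k). (\<lambda>i. x i - k i, k)) a \<in> states d (N - s) \<times> states d s"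
      unfolding A_def using diff_states by auto
  next
    fix b assume "b \<in> states d (N - s) \<times> states d s"
    then show "(\<lambda>(x,k). (\<lambda>i. x i - k i, k)) ((\<lambda>(z,k). (\<lambda>i. z i + k i, k)) b) = b" by auto
  next
    fix b assume "b \<in> states d (N - s) \<times> states d s"
    then show "(\<lambda>(z,k). (\<lambda>i. z i + k i, k)) b \<in> A"
      unfolding A_def using add_states[of "fst b" d "N - s" "snd b" s] sN by auto
  next
    fix a assume "a \<in> A"
    then have "(\<lambda>i. fst a i - snd a i + snd a i) = fst a" unfolding A_def by auto
    then show "(\<lambda>(z,k). F (\<lambda>i. z i + k i) k) ((\<lambda>(x,k). (\<lambda>i. x i - k i, k)) a) = (\<lambda>(x,k). F x k) a"
      by (auto simp: split_beta)
  qed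
  also have "\<dots> = (\<Sum>z\<in>states d (N - s). \<Sum>k\<in>states d s. F (\<lambda>i. z i + k i) k)"
    by (simp add: sum.cartesian_product)
  finally show ?thesis .
qed

lemma ip_K: assumes pos: "\<forall>i\<in>{1..Suc e}. p i > 0" and S1: "(\<Sum>i=1..Suc e. p i) = 1" and sN: "s \<le> N"
  shows "(\<Sum>x\<in>states (Suc e) N. multinom (Suc e) N p x * Pr (Suc e) (real N) p mm x *
          (\<Sum>y\<in>states (Suc e) N. ehrenfest (Suc e) N s p x y * Pr (Suc e) (real N) p nn y))
       = NS (Suc e) (N - s) p nn mm"
proof -
  let ?d = "Suc e"
  have rN: "real N - real s = real (N - s)" using sN by (simp add: of_nat_diff)
  have U: "(\<Sum>m\<in>states ?d s. multinom ?d s p m * Pr ?d (real N) p nn (\<lambda>i. z i + m i)) = Pr ?d (real (N - s)) p nn z" for nn z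
    using MU[OF pos, of s "real N" nn z] unfolding S1 rN by simp
  have "(\<Sum>x\<in>states ?d N. multinom ?d N p x * Pr ?d (real N) p mm x *
          (\<Sum>y\<in>states ?d N. ehrenfest ?d N s p x y * Pr ?d (real N) p nn y))
     = (\<Sum>x\<in>states ?d N. \<Sum>k\<in>states ?d s. if (\<forall>i. k i \<le> x i) then
          multinom ?d (N - s) p (\<lambda>i. x i - k i) * multinom ?d s p k * Pr ?d (real N) p mm x * Pr ?d (real (N - s)) p nn (\<lambda>i. x i - k i) else 0)"
  proof (intro sum.cong refl)
    fix x assume x: "x \<in> states ?d N"
    show "multinom ?d N p x * Pr ?d (real N) p mm x *
          (\<Sum>y\<in>states ?d N. ehrenfest ?d N s p x y * Pr ?d (real N) p nn y)
      = (\<Sum>k\<in>states ?d s. if (\<forall>i. k i \<le> x i) then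
          multinom ?d (N - s) p (\<lambda>i. x i - k i) * multinom ?d s p k * Pr ?d (real N) p mm x * Pr ?d (real (N - s)) p nn (\<lambda>i. x i - k i) else 0)"
      unfolding K_action[OF x sN] sum_distrib_left[where r="multinom ?d N p x * Pr ?d (real N) p mm x"]
    proof (intro sum.cong refl)
      fix k assume k: "k \<in> states ?d s"
      show "multinom ?d N p x * Pr ?d (real N) p mm x *
         (if \<forall>i. k i \<le> x i then (\<Prod>i = 1..?d. real (x i choose k i)) / real (N choose s) *
            (\<Sum>m\<in>states ?d s. multinom ?d s p m * Pr ?d (real N) p nn (\<lambda>i. x i - k i + m i)) else 0)
        = (if (\<forall>i. k i \<le> x i) then
          multinom ?d (N - s) p (\<lambda>i. x i - k i) * multinom ?d s p k * Pr ?d (real N) p mm x * Pr ?d (real (N - s)) p nn (\<lambda>i. x i - k i) else 0)"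
      proof (cases "\<forall>i. k i \<le> x i")
        case True
        have "multinom ?d N p x * Pr ?d (real N) p mm x * ((\<Prod>i = 1..?d. real (x i choose k i)) / real (N choose s) *
            (\<Sum>m\<in>states ?d s. multinom ?d s p m * Pr ?d (real N) p nn (\<lambda>i. x i - k i + m i)))
          = (multinom ?d N p x * (\<Prod>i = 1..?d. real (x i choose k i)) / real (N choose s)) * Pr ?d (real N) p mm x *
            (\<Sum>m\<in>states ?d s. multinom ?d s p m * Pr ?d (real N) p nn (\<lambda>i. x i - k i + m i))"
          by simp
        also have "\<dots> = multinom ?d (N - s) p (\<lambda>i. x i - k i) * multinom ?d s p k * Pr ?d (real N) p mm x * Pr ?d (real (N - s)) p nn (\<lambda>i. x i - k i)"
          unfolding multinom_H[OF x k True sN] U[of nn "\<lambda>i. x i - k i"] ..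
        finally show ?thesis using True by simp
      next
        case False
        then have F: "(\<forall>i. k i \<le> x i) = False" by simp
        show ?thesis unfolding F by simp
      qed
    qed
  qed
  also have "\<dots> = (\<Sum>z\<in>states ?d (N - s). \<Sum>k\<in>states ?d s.
          multinom ?d (N - s) p (\<lambda>i. z i + k i - k i) * multinom ?d s p k * Pr ?d (real N) p mm (\<lambda>i. z i + k i) * Pr ?d (real (N - s)) p nn (\<lambda>i. z i + k i - k i))"
    by (rule reindex_sub[OF sN])
  also have "\<dots> = (\<Sum>z\<in>states ?d (N - s). multinom ?d (N - s) p z * Pr ?d (real (N - s)) p nn z *
         (\<Sum>k\<in>states ?d s. multinom ?d s p k * Pr ?d (real N) p mm (\<lambda>i. z i + k i)))"
    by (simp add: sum_distrib_left mult_ac)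
  also have "\<dots> = NS ?d (N - s) p nn mm"
    unfolding U NS_def ..
  finally show ?thesis .
qed



lemma falling_pos: "n \<le> N \<Longrightarrow> falling (real N) n > 0"
  by (simp add: falling_fact)

lemma states_supp: "nn \<in> states e n \<Longrightarrow> supp e nn" unfolding states_def2 by simp

lemma Pr_zero: "Pr d L p (\<lambda>_. 0) x = 1"
  unfolding Pr_def kraw_scaled_def by simp

context
  fixes e0 N :: nat and p :: "nat \<Rightarrow> real"
  assumes pos: "\<forall>i\<in>{1..Suc (Suc e0)}. p i > 0" and S1: "(\<Sum>i=1..Suc (Suc e0). p i) = 1"
begin

lemma norm_form: assumes "nn \<in> states (Suc e0) n"
  shows "\<exists>c>0. ((\<forall>i. nn i = 0) \<longrightarrow> c = 1) \<and> (\<forall>L. NS (Suc (Suc e0)) L p nn nn = c * falling (real L) n)"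
proof -
  have sp: "supp (Suc e0) nn" using assms by (rule states_supp)
  obtain c where "c > 0" "(\<forall>i. nn i = 0) \<longrightarrow> c = 1" "\<forall>L. NS (Suc (Suc e0)) L p nn nn = c * falling (real L) (\<Sum>i=1..Suc e0. nn i) * 1 ^ L"
    using MO[OF pos sp sp] unfolding S1 by auto
  then show ?thesis using sum_states[OF assms] by auto
qed

lemma orth_off: assumes "nn \<in> states (Suc e0) n" "mm \<in> states (Suc e0) n'" "nn \<noteq> mm"
  shows "NS (Suc (Suc e0)) L p nn mm = 0"
  using MO[OF pos states_supp[OF assms(1)] states_supp[OF assms(2)]] assms(3) by auto

lemma Idx_mem: "nn \<in> Idx e N' \<longleftrightarrow> (\<exists>n\<le>N'. nn \<in> states e n)"
  unfolding Idx_def by auto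

lemma w_pos: assumes "nn \<in> Idx (Suc e0) N" shows "NS (Suc (Suc e0)) N p nn nn > 0"
proof -
  obtain n where n: "n \<le> N" "nn \<in> states (Suc e0) n" using assms unfolding Idx_mem by auto
  obtain c where "c > 0" "\<forall>L. NS (Suc (Suc e0)) L p nn nn = c * falling (real L) n"
    using norm_form[OF n(2)] by auto
  then show ?thesis using falling_pos[OF n(1)] by simp
qed

lemma orth_Idx: assumes "nn \<in> Idx (Suc e0) N" "mm \<in> Idx (Suc e0) N"
  shows "(\<Sum>x\<in>states (Suc (Suc e0)) N. multinom (Suc (Suc e0)) N p x * Pr (Suc (Suc e0)) (real N) p nn x * Pr (Suc (Suc e0)) (real N) p mm x)
     = (if nn = mm then NS (Suc (Suc e0)) N p nn nn else 0)"
  using assms orth_off unfolding Idx_mem NS_def[symmetric] by auto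

lemma completeness: assumes "x \<in> states (Suc (Suc e0)) N" "y \<in> states (Suc (Suc e0)) N"
  shows "(\<Sum>nn\<in>Idx (Suc e0) N. multinom (Suc (Suc e0)) N p x * Pr (Suc (Suc e0)) (real N) p nn x * Pr (Suc (Suc e0)) (real N) p nn y
     / NS (Suc (Suc e0)) N p nn nn) = (if x = y then 1 else 0)"
  by (rule completeness_abstract[where P="\<lambda>nn. Pr (Suc (Suc e0)) (real N) p nn" and pi="multinom (Suc (Suc e0)) N p"])
     (auto simp: finite_Idx finite_states card_Idx orth_Idx assms dest: w_pos)

lemma expansion: assumes "y \<in> states (Suc (Suc e0)) N"
  shows "f y = (\<Sum>mm\<in>Idx (Suc e0) N. (\<Sum>x\<in>states (Suc (Suc e0)) N. multinom (Suc (Suc e0)) N p x * f x * Pr (Suc (Suc e0)) (real N) p mm x)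
      / NS (Suc (Suc e0)) N p mm mm * Pr (Suc (Suc e0)) (real N) p mm y)"
proof -
  let ?X = "states (Suc (Suc e0)) N"
  have "f y = (\<Sum>x\<in>?X. if y = x then f x else 0)" using assms by (simp add: finite_states)
  also have "\<dots> = (\<Sum>x\<in>?X. f x * (if x = y then 1 else 0))" by (intro sum.cong) auto
  also have "\<dots> = (\<Sum>x\<in>?X. f x * (\<Sum>nn\<in>Idx (Suc e0) N. multinom (Suc (Suc e0)) N p x * Pr (Suc (Suc e0)) (real N) p nn x * Pr (Suc (Suc e0)) (real N) p nn y
     / NS (Suc (Suc e0)) N p nn nn))"
    using completeness assms by (intro sum.cong refl) simp
  also have "\<dots> = (\<Sum>mm\<in>Idx (Suc e0) N. (\<Sum>x\<in>?X. multinom (Suc (Suc e0)) N p x * f x * Pr (Suc (Suc e0)) (real N) p mm x)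
      / NS (Suc (Suc e0)) N p mm mm * Pr (Suc (Suc e0)) (real N) p mm y)"
    unfolding sum_distrib_left sum_distrib_right sum_divide_distrib
    by (subst sum.swap) (simp add: mult_ac)
  finally show ?thesis .
qed

lemma complete_zero: assumes "\<forall>mm\<in>Idx (Suc e0) N. (\<Sum>x\<in>states (Suc (Suc e0)) N. multinom (Suc (Suc e0)) N p x * g x * Pr (Suc (Suc e0)) (real N) p mm x) = 0"
  and "y \<in> states (Suc (Suc e0)) N"
  shows "g y = 0"
  using expansion[OF assms(2), of g] assms(1) by simp

lemma eigen_Pr: assumes nn: "nn \<in> states (Suc e0) n" and nN: "n \<le> N" and sN: "s \<le> N" and x: "x \<in> states (Suc (Suc e0)) N"
  shows "(\<Sum>y\<in>states (Suc (Suc e0)) N. ehrenfest (Suc (Suc e0)) N s p x y * Pr (Suc (Suc e0)) (real N) p nn y)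
      = ehr_beta N s n * Pr (Suc (Suc e0)) (real N) p nn x"
proof -
  let ?d = "Suc (Suc e0)"
  let ?P = "\<lambda>nn. Pr ?d (real N) p nn"
  define g where "g x = (\<Sum>y\<in>states ?d N. ehrenfest ?d N s p x y * ?P nn y) - ehr_beta N s n * ?P nn x" for x
  obtain c where c: "c > 0" "\<forall>L. NS ?d L p nn nn = c * falling (real L) n" using norm_form[OF nn] by auto
  have beta: "ehr_beta N s n * falling (real N) n = falling (real (N - s)) n"
    unfolding ehr_beta_def using falling_pos[OF nN] sN by (simp add: of_nat_diff)
  have "\<forall>mm\<in>Idx (Suc e0) N. (\<Sum>x\<in>states ?d N. multinom ?d N p x * g x * ?P mm x) = 0"
  proof
    fix mm assume mm: "mm \<in> Idx (Suc e0) N"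
    then obtain n' where mm': "mm \<in> states (Suc e0) n'" unfolding Idx_mem by auto
    have "(\<Sum>x\<in>states ?d N. multinom ?d N p x * g x * ?P mm x)
       = (\<Sum>x\<in>states ?d N. multinom ?d N p x * ?P mm x * (\<Sum>y\<in>states ?d N. ehrenfest ?d N s p x y * ?P nn y))
         - ehr_beta N s n * (\<Sum>x\<in>states ?d N. multinom ?d N p x * ?P nn x * ?P mm x)"
    proof -
      have "(\<Sum>x\<in>states ?d N. multinom ?d N p x * g x * ?P mm x)
        = (\<Sum>x\<in>states ?d N. multinom ?d N p x * ?P mm x * (\<Sum>y\<in>states ?d N. ehrenfest ?d N s p x y * ?P nn y)
           - ehr_beta N s n * (multinom ?d N p x * ?P nn x * ?P mm x))"
        unfolding g_def by (intro sum.cong refl) (simp add: algebra_simps)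
      then show ?thesis by (simp add: sum_subtractf sum_distrib_left)
    qed
    also have "\<dots> = NS ?d (N - s) p nn mm - ehr_beta N s n * NS ?d N p nn mm"
      unfolding ip_K[OF pos S1 sN] NS_def ..
    also have "\<dots> = 0"
    proof (cases "nn = mm")
      case True
      then show ?thesis using c beta by (simp add: mult_ac)
    next
      case False
      then show ?thesis using orth_off[OF nn mm'] by simp
    qed
    finally show "(\<Sum>x\<in>states ?d N. multinom ?d N p x * g x * ?P mm x) = 0" .
  qed
  then have "g x = 0" using complete_zero x by blast
  then show ?thesis unfolding g_def by simp
qed

end



lemma multinom_pos: "\<forall>i\<in>{1..d}. p i > 0 \<Longrightarrow> multinom d N p y > 0"
  unfolding multinom_def by (auto intro!: mult_pos_pos divide_pos_pos prod_pos)

definition bnn :: "nat \<Rightarrow> nat \<Rightarrow> nat \<Rightarrow> (nat \<Rightarrow> nat) \<Rightarrow> real" where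
  "bnn e N s nn = ehr_beta N s (\<Sum>i=1..e. nn i)"

context
  fixes e0 N s :: nat and p :: "nat \<Rightarrow> real"
  assumes pos: "\<forall>i\<in>{1..Suc (Suc e0)}. p i > 0" and S1: "(\<Sum>i=1..Suc (Suc e0). p i) = 1" and sN: "s \<le> N"
begin

abbreviation "dd \<equiv> Suc (Suc e0)"
abbreviation "PP nn \<equiv> Pr dd (real N) p nn"
abbreviation "ww nn \<equiv> NS dd N p nn nn"
abbreviation "XX \<equiv> states dd N"
abbreviation "II \<equiv> Idx (Suc e0) N"

lemma eigen_Idx: assumes "nn \<in> II" "x \<in> XX"
  shows "(\<Sum>y\<in>XX. ehrenfest dd N s p x y * PP nn y) = bnn (Suc e0) N s nn * PP nn x"
proof -
  obtain n where n: "n \<le> N" "nn \<in> states (Suc e0) n" using assms(1) unfolding Idx_def by auto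
  show ?thesis using eigen_Pr[OF pos S1 n(2) n(1) sN assms(2)] sum_states[OF n(2)] unfolding bnn_def by simp
qed

lemma left_eigen: assumes nn: "nn \<in> II" and y: "y \<in> XX"
  shows "(\<Sum>z\<in>XX. multinom dd N p z * PP nn z * ehrenfest dd N s p z y) = bnn (Suc e0) N s nn * multinom dd N p y * PP nn y"
proof -
  define g where "g y = (\<Sum>z\<in>XX. multinom dd N p z * PP nn z * ehrenfest dd N s p z y) / multinom dd N p y - bnn (Suc e0) N s nn * PP nn y" for y
  have "\<forall>mm\<in>II. (\<Sum>y\<in>XX. multinom dd N p y * g y * PP mm y) = 0"
  proof
    fix mm assume mm: "mm \<in> II"
    have "(\<Sum>y\<in>XX. multinom dd N p y * g y * PP mm y)
      = (\<Sum>y\<in>XX. (\<Sum>z\<in>XX. multinom dd N p z * PP nn z * ehrenfest dd N s p z y) * PP mm y - bnn (Suc e0) N s nn * (multinom dd N p y * PP nn y * PP mm y))"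
    proof -
      have mnz: "\<And>y. multinom dd N p y \<noteq> 0" using multinom_pos[OF pos] by (metis less_irrefl)
      show ?thesis unfolding g_def by (intro sum.cong refl) (simp add: mnz field_simps)
    qed
    also have "\<dots> = (\<Sum>y\<in>XX. \<Sum>z\<in>XX. multinom dd N p z * PP nn z * ehrenfest dd N s p z y * PP mm y) - bnn (Suc e0) N s nn * NS dd N p nn mm"
      unfolding NS_def sum_subtractf sum_distrib_left sum_distrib_right ..
    also have "(\<Sum>y\<in>XX. \<Sum>z\<in>XX. multinom dd N p z * PP nn z * ehrenfest dd N s p z y * PP mm y)
       = (\<Sum>z\<in>XX. multinom dd N p z * PP nn z * (\<Sum>y\<in>XX. ehrenfest dd N s p z y * PP mm y))"
      by (subst sum.swap) (simp add: sum_distrib_left mult_ac)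
    also have "\<dots> = bnn (Suc e0) N s mm * NS dd N p nn mm"
    proof -
      have "(\<Sum>z\<in>XX. multinom dd N p z * PP nn z * (\<Sum>y\<in>XX. ehrenfest dd N s p z y * PP mm y))
         = (\<Sum>z\<in>XX. bnn (Suc e0) N s mm * (multinom dd N p z * PP nn z * PP mm z))"
        using eigen_Idx[OF mm] by (intro sum.cong refl) (simp add: mult_ac)
      then show ?thesis unfolding NS_def by (simp only: sum_distrib_left)
    qed
    also have "bnn (Suc e0) N s mm * NS dd N p nn mm - bnn (Suc e0) N s nn * NS dd N p nn mm = 0"
    proof (cases "nn = mm")
      case False
      then show ?thesis using orth_Idx[OF pos S1 nn mm] unfolding NS_def by simp
    qed simp
    finally show "(\<Sum>y\<in>XX. multinom dd N p y * g y * PP mm y) = 0" .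
  qed
  then have "g y = 0" using complete_zero[OF pos S1] y by blast
  then show ?thesis unfolding g_def using multinom_pos[OF pos, of N y] by (simp add: field_simps)
qed

lemma pow_formula: assumes x: "x \<in> XX" and y: "y \<in> XX"
  shows "ehrenfest_pow dd N s p l x y = multinom dd N p y * (\<Sum>nn\<in>II. bnn (Suc e0) N s nn ^ l * PP nn x * PP nn y / ww nn)"
  using y
proof (induction l arbitrary: y)
  case 0
  have "(\<Sum>nn\<in>II. multinom dd N p y * PP nn y * PP nn x / ww nn) = (if y = x then 1 else 0)"
    using completeness[OF pos S1 0 x] .
  then show ?case by (simp add: sum_distrib_left mult_ac)
next
  case (Suc l)
  have "ehrenfest_pow dd N s p (Suc l) x y = (\<Sum>z\<in>XX. multinom dd N p z * (\<Sum>nn\<in>II. bnn (Suc e0) N s nn ^ l * PP nn x * PP nn z / ww nn) * ehrenfest dd N s p z y)"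
    using Suc.IH by simp
  also have "\<dots> = (\<Sum>nn\<in>II. bnn (Suc e0) N s nn ^ l * PP nn x / ww nn * (\<Sum>z\<in>XX. multinom dd N p z * PP nn z * ehrenfest dd N s p z y))"
    unfolding sum_distrib_left sum_distrib_right by (subst sum.swap) (simp add: mult_ac)
  also have "\<dots> = (\<Sum>nn\<in>II. bnn (Suc e0) N s nn ^ l * PP nn x / ww nn * (bnn (Suc e0) N s nn * multinom dd N p y * PP nn y))"
    using left_eigen Suc.prems by (intro sum.cong refl) simp
  also have "\<dots> = multinom dd N p y * (\<Sum>nn\<in>II. bnn (Suc e0) N s nn ^ Suc l * PP nn x * PP nn y / ww nn)"
    unfolding sum_distrib_left by (intro sum.cong refl) (simp add: mult_ac)
  finally show ?case .
qed

end



lemma zero_states: "(\<lambda>_. 0) \<in> states e 0" unfolding states_def by simp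

context
  fixes e0 N s :: nat and p :: "nat \<Rightarrow> real"
  assumes pos: "\<forall>i\<in>{1..Suc (Suc e0)}. p i > 0" and S1: "(\<Sum>i=1..Suc (Suc e0). p i) = 1" and sN: "s \<le> N"
begin

lemma chi_formula: assumes x: "x \<in> states (Suc (Suc e0)) N"
  shows "chi_sq (Suc (Suc e0)) N s p x l =
    (\<Sum>nn\<in>Idx (Suc e0) N - {\<lambda>_. 0}. bnn (Suc e0) N s nn ^ (2*l) * Pr (Suc (Suc e0)) (real N) p nn x ^ 2 / NS (Suc (Suc e0)) N p nn nn)"
proof -
  let ?d = "Suc (Suc e0)"
  let ?X = "states ?d N"
  let ?I = "Idx (Suc e0) N"
  let ?J = "Idx (Suc e0) N - {\<lambda>_. 0}"
  let ?P = "\<lambda>nn. Pr ?d (real N) p nn"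
  let ?w = "\<lambda>nn. NS ?d N p nn nn"
  let ?b = "bnn (Suc e0) N s"
  define a where "a nn = ?b nn ^ l * ?P nn x / ?w nn" for nn
  define A where "A y = (\<Sum>nn\<in>?J. a nn * ?P nn y)" for y
  have Z: "(\<lambda>_. 0) \<in> ?I" unfolding Idx_def using zero_states[of "Suc e0"] by (intro UN_I[of 0]) auto
  have wZ: "?w (\<lambda>_. 0) = 1"
  proof -
    obtain c where "c > 0" "(\<forall>i. (0::nat) = 0) \<longrightarrow> c = 1" "\<forall>L. NS ?d L p (\<lambda>_. 0) (\<lambda>_. 0) = c * falling (real L) 0"
      using norm_form[OF pos S1 zero_states] by blast
    then show ?thesis by (simp add: falling_def)
  qed
  have bZ: "?b (\<lambda>_. 0) = 1" unfolding bnn_def ehr_beta_def falling_def by simp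
  have mpos: "multinom ?d N p y > 0" for y using multinom_pos[OF pos] .
  have K: "ehrenfest_pow ?d N s p l x y - multinom ?d N p y = multinom ?d N p y * A y" if y: "y \<in> ?X" for y
  proof -
    have "ehrenfest_pow ?d N s p l x y = multinom ?d N p y * (\<Sum>nn\<in>?I. ?b nn ^ l * ?P nn x * ?P nn y / ?w nn)"
      by (rule pow_formula[OF pos S1 sN x y])
    also have "(\<Sum>nn\<in>?I. ?b nn ^ l * ?P nn x * ?P nn y / ?w nn) = 1 + A y"
      unfolding A_def a_def using Z wZ bZ
      by (subst sum.remove[OF finite_Idx Z]) (simp add: Pr_zero mult_ac)
    finally show ?thesis by (simp add: algebra_simps)
  qed
  have "chi_sq ?d N s p x l = (\<Sum>y\<in>?X. multinom ?d N p y * A y * A y)"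
    unfolding chi_sq_def using K mpos by (intro sum.cong refl) (simp add: power2_eq_square less_imp_neq[symmetric])
  also have "\<dots> = (\<Sum>y\<in>?X. \<Sum>nn\<in>?J. \<Sum>mm\<in>?J. a nn * a mm * (multinom ?d N p y * ?P nn y * ?P mm y))"
    unfolding A_def sum_distrib_left sum_distrib_right by (intro sum.cong refl) (simp add: mult_ac)
  also have "\<dots> = (\<Sum>nn\<in>?J. \<Sum>mm\<in>?J. a nn * a mm * NS ?d N p nn mm)"
    unfolding NS_def sum_distrib_left by (subst sum.swap) (subst (2) sum.swap, rule refl)
  also have "\<dots> = (\<Sum>nn\<in>?J. a nn * a nn * ?w nn)"
  proof (intro sum.cong refl)
    fix nn assume nn: "nn \<in> ?J"
    have "(\<Sum>mm\<in>?J. a nn * a mm * NS ?d N p nn mm) = (\<Sum>mm\<in>?J. if nn = mm then a nn * a mm * ?w nn else 0)"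
    proof (intro sum.cong refl)
      fix mm assume mm: "mm \<in> ?J"
      show "a nn * a mm * NS ?d N p nn mm = (if nn = mm then a nn * a mm * ?w nn else 0)"
        using orth_Idx[OF pos S1, where nn=nn and mm=mm and N=N] nn mm unfolding NS_def by auto
    qed
    also have "\<dots> = a nn * a nn * ?w nn" using nn by (simp add: finite_Idx)
    finally show "(\<Sum>mm\<in>?J. a nn * a mm * NS ?d N p nn mm) = a nn * a nn * ?w nn" .
  qed
  also have "\<dots> = (\<Sum>nn\<in>?J. ?b nn ^ (2*l) * ?P nn x ^ 2 / ?w nn)"
  proof (intro sum.cong refl)
    fix nn assume nn: "nn \<in> ?J"
    then have "?w nn > 0" using w_pos[OF pos S1] by auto
    then show "a nn * a nn * ?w nn = ?b nn ^ (2*l) * ?P nn x ^ 2 / ?w nn"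
      unfolding a_def by (simp add: power2_eq_square power_mult field_simps)
  qed
  finally show ?thesis .
qed

end



definition kap :: "nat \<Rightarrow> nat \<Rightarrow> (nat \<Rightarrow> nat) \<Rightarrow> real" where
  "kap e N nn = (-1)^(\<Sum>i=1..e. nn i) / falling (real N) (\<Sum>i=1..e. nn i)"

lemma mkraw_kap: "mkraw (Suc e) N p nn x = kap e N nn * Pr (Suc e) (real N) p nn x"
  unfolding mkraw_Pr kap_def by simp

lemma kap_nz: "nn \<in> Idx e N \<Longrightarrow> kap e N nn \<noteq> 0"
  unfolding Idx_def kap_def using falling_pos by (auto dest!: sum_states simp: less_imp_neq[symmetric])

lemma states0_zero: "nn \<in> states e 0 \<Longrightarrow> nn = (\<lambda>_. 0)"
  unfolding states_def by (auto simp: fun_eq_iff)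

lemma Idx_minus: "Idx e N - {\<lambda>_. 0} = (\<Union>n\<in>{1..N}. states e n)"
proof (rule Set.set_eqI, rule iffI)
  fix nn assume "nn \<in> Idx e N - {\<lambda>_. 0}"
  then obtain n where "n \<le> N" "nn \<in> states e n" "nn \<noteq> (\<lambda>_. 0)" unfolding Idx_def by auto
  moreover have "n \<noteq> 0" using calculation states0_zero[of nn e] by (cases n) auto
  ultimately show "nn \<in> (\<Union>n\<in>{1..N}. states e n)" by auto
next
  fix nn assume "nn \<in> (\<Union>n\<in>{1..N}. states e n)"
  then obtain n where n: "1 \<le> n" "n \<le> N" "nn \<in> states e n" by auto
  then have "nn \<noteq> (\<lambda>_. 0)" unfolding states_def by auto
  then show "nn \<in> Idx e N - {\<lambda>_. 0}" using n unfolding Idx_def by auto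
qed

theorem theorem4p24:
  fixes d N s :: nat and p :: "nat \<Rightarrow> real"
  assumes "d \<ge> 2" and "N \<ge> 1" and "s \<le> N" and "prob_vec d p"
  shows
    "(\<forall>n\<le>N. \<forall>nn\<in>states (d-1) n. \<forall>x\<in>states d N.
        (\<Sum>y\<in>states d N. ehrenfest d N s p x y * mkraw d N p nn y)
          = ehr_beta N s n * mkraw d N p nn x)
   \<and> (\<forall>n\<le>N. card (states (d-1) n) = (d + n - 2) choose n)
   \<and> (\<forall>c :: (nat \<Rightarrow> nat) \<Rightarrow> real.
        (\<forall>x\<in>states d N. (\<Sum>nn\<in>(\<Union>n\<in>{0..N}. states (d-1) n). c nn * mkraw d N p nn x) = 0)
        \<longrightarrow> (\<forall>nn\<in>(\<Union>n\<in>{0..N}. states (d-1) n). c nn = 0))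
   \<and> (\<forall>f :: (nat \<Rightarrow> nat) \<Rightarrow> real. \<exists>c :: (nat \<Rightarrow> nat) \<Rightarrow> real.
        \<forall>x\<in>states d N. f x = (\<Sum>nn\<in>(\<Union>n\<in>{0..N}. states (d-1) n). c nn * mkraw d N p nn x))
   \<and> ehr_beta N s 0 = 1 \<and> card (states (d-1) 0) = 1
   \<and> ehr_beta N s 1 = 1 - real s / real N \<and> card (states (d-1) 1) = d - 1
   \<and> (\<forall>x\<in>states d N. \<forall>l::nat.
        chi_sq d N s p x l = (\<Sum>n=1..N. ehr_beta N s n ^ (2*l) * kernel_poly d N p n x x))"
proof -
  obtain e0 where d: "d = Suc (Suc e0)" using assms(1) by (metis add_2_eq_Suc le_Suc_ex)
  have pos: "\<forall>i\<in>{1..Suc (Suc e0)}. p i > 0" and S1: "(\<Sum>i=1..Suc (Suc e0). p i) = 1"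
    using assms(4) unfolding prob_vec_def d by auto
  have sN: "s \<le> N" by fact
  have d1: "d - 1 = Suc e0" unfolding d by simp
  have IdxU: "(\<Union>n\<in>{0..N}. states (d-1) n) = Idx (Suc e0) N" unfolding d1 Idx_def ..
  let ?d = "Suc (Suc e0)"
  let ?X = "states ?d N"
  let ?I = "Idx (Suc e0) N"
  let ?P = "\<lambda>nn. Pr ?d (real N) p nn"
  let ?w = "\<lambda>nn. NS ?d N p nn nn"
  have mk: "mkraw d N p nn x = kap (Suc e0) N nn * ?P nn x" for nn x
    unfolding d by (rule mkraw_kap)
  have P1: "\<forall>n\<le>N. \<forall>nn\<in>states (d-1) n. \<forall>x\<in>states d N.
        (\<Sum>y\<in>states d N. ehrenfest d N s p x y * mkraw d N p nn y)
          = ehr_beta N s n * mkraw d N p nn x"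
  proof (intro allI impI ballI)
    fix n nn x assume n: "n \<le> N" and nn: "nn \<in> states (d-1) n" and x: "x \<in> states d N"
    have nn': "nn \<in> states (Suc e0) n" using nn d1 by simp
    have x': "x \<in> ?X" using x d by simp
    have "(\<Sum>y\<in>states d N. ehrenfest d N s p x y * mkraw d N p nn y)
      = kap (Suc e0) N nn * (\<Sum>y\<in>?X. ehrenfest ?d N s p x y * ?P nn y)"
      unfolding mk sum_distrib_left unfolding d by (simp add: mult_ac)
    also have "\<dots> = ehr_beta N s n * mkraw d N p nn x"
      unfolding eigen_Pr[OF pos S1 nn' n sN x'] mk by simp
    finally show "(\<Sum>y\<in>states d N. ehrenfest d N s p x y * mkraw d N p nn y) = ehr_beta N s n * mkraw d N p nn x" .
  qed
  have P2: "\<forall>n. card (states (d-1) n) = (d + n - 2) choose n"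
    unfolding d1 unfolding d by (simp add: card_states)
  have P3: "\<forall>c :: (nat \<Rightarrow> nat) \<Rightarrow> real.
        (\<forall>x\<in>states d N. (\<Sum>nn\<in>(\<Union>n\<in>{0..N}. states (d-1) n). c nn * mkraw d N p nn x) = 0)
        \<longrightarrow> (\<forall>nn\<in>(\<Union>n\<in>{0..N}. states (d-1) n). c nn = 0)"
  proof (intro allI impI ballI)
    fix c :: "(nat \<Rightarrow> nat) \<Rightarrow> real" and mm
    assume H: "\<forall>x\<in>states d N. (\<Sum>nn\<in>(\<Union>n\<in>{0..N}. states (d-1) n). c nn * mkraw d N p nn x) = 0"
      and mm: "mm \<in> (\<Union>n\<in>{0..N}. states (d-1) n)"
    have mm': "mm \<in> ?I" using mm unfolding IdxU .
    have H': "\<forall>x\<in>?X. (\<Sum>nn\<in>?I. c nn * kap (Suc e0) N nn * ?P nn x) = 0"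
      using H unfolding IdxU mk unfolding d by (simp add: mult_ac)
    have "0 = (\<Sum>x\<in>?X. multinom ?d N p x * ?P mm x * (\<Sum>nn\<in>?I. c nn * kap (Suc e0) N nn * ?P nn x))"
      using H' by simp
    also have "\<dots> = (\<Sum>nn\<in>?I. c nn * kap (Suc e0) N nn * (\<Sum>x\<in>?X. multinom ?d N p x * ?P nn x * ?P mm x))"
      unfolding sum_distrib_left by (subst sum.swap) (simp add: mult_ac)
    also have "\<dots> = (\<Sum>nn\<in>?I. if nn = mm then c nn * kap (Suc e0) N nn * ?w nn else 0)"
      using orth_Idx[OF pos S1, where N=N and mm=mm] mm' by (intro sum.cong refl) auto
    also have "\<dots> = c mm * kap (Suc e0) N mm * ?w mm"
      using mm' by (simp add: finite_Idx)
    finally have "c mm * kap (Suc e0) N mm * ?w mm = 0" ..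
    then show "c mm = 0" using kap_nz[OF mm'] w_pos[OF pos S1 mm'] by simp
  qed
  have P4: "\<forall>f :: (nat \<Rightarrow> nat) \<Rightarrow> real. \<exists>c :: (nat \<Rightarrow> nat) \<Rightarrow> real.
        \<forall>x\<in>states d N. f x = (\<Sum>nn\<in>(\<Union>n\<in>{0..N}. states (d-1) n). c nn * mkraw d N p nn x)"
  proof
    fix f :: "(nat \<Rightarrow> nat) \<Rightarrow> real"
    define c where "c nn = (\<Sum>x\<in>?X. multinom ?d N p x * f x * ?P nn x) / ?w nn / kap (Suc e0) N nn" for nn
    have "\<forall>x\<in>states d N. f x = (\<Sum>nn\<in>(\<Union>n\<in>{0..N}. states (d-1) n). c nn * mkraw d N p nn x)"
    proof
      fix x assume x: "x \<in> states d N"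
      then have x': "x \<in> ?X" using d by simp
      have "f x = (\<Sum>mm\<in>?I. (\<Sum>z\<in>?X. multinom ?d N p z * f z * ?P mm z) / ?w mm * ?P mm x)"
        by (rule expansion[OF pos S1 x'])
      also have "\<dots> = (\<Sum>nn\<in>?I. c nn * mkraw d N p nn x)"
        unfolding mk c_def using kap_nz by (intro sum.cong refl) simp
      finally show "f x = (\<Sum>nn\<in>(\<Union>n\<in>{0..N}. states (d-1) n). c nn * mkraw d N p nn x)" unfolding IdxU .
    qed
    then show "\<exists>c :: (nat \<Rightarrow> nat) \<Rightarrow> real. \<forall>x\<in>states d N. f x = (\<Sum>nn\<in>(\<Union>n\<in>{0..N}. states (d-1) n). c nn * mkraw d N p nn x)"
      by blast
  qed
  have P5: "ehr_beta N s 0 = 1" unfolding ehr_beta_def falling_def by simp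
  have P6: "card (states (d-1) 0) = 1" using P2 by simp
  have P7: "ehr_beta N s 1 = 1 - real s / real N"
    unfolding ehr_beta_def falling_def using assms(2) by (simp add: field_simps)
  have P8: "card (states (d-1) 1) = d - 1" using P2 d by simp
  have P9: "\<forall>x\<in>states d N. \<forall>l::nat.
        chi_sq d N s p x l = (\<Sum>n=1..N. ehr_beta N s n ^ (2*l) * kernel_poly d N p n x x)"
  proof (intro allI ballI)
    fix x l assume x: "x \<in> states d N"
    then have x': "x \<in> ?X" using d by simp
    have kp: "kernel_poly d N p n x x = (\<Sum>nn\<in>states (Suc e0) n. ?P nn x ^ 2 / ?w nn)" if n: "n \<in> {1..N}" for n
      unfolding kernel_poly_def d1
    proof (intro sum.cong refl)
      fix nn assume nn: "nn \<in> states (Suc e0) n"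
      then have nnI: "nn \<in> ?I" using n unfolding Idx_def by auto
      have den: "(\<Sum>z\<in>states d N. multinom d N p z * (mkraw d N p nn z)^2) = (kap (Suc e0) N nn)^2 * ?w nn"
        unfolding mk unfolding NS_def d sum_distrib_left by (intro sum.cong refl) (simp add: power2_eq_square mult_ac)
      show "mkraw d N p nn x * mkraw d N p nn x / (\<Sum>z\<in>states d N. multinom d N p z * (mkraw d N p nn z)^2) = ?P nn x ^ 2 / ?w nn"
        unfolding den unfolding mk using kap_nz[OF nnI] w_pos[OF pos S1 nnI] by (simp add: power2_eq_square field_simps)
    qed
    have "chi_sq d N s p x l = (\<Sum>nn\<in>?I - {\<lambda>_. 0}. bnn (Suc e0) N s nn ^ (2*l) * ?P nn x ^ 2 / ?w nn)"
      unfolding d by (rule chi_formula[OF pos S1 sN x'])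
    also have "\<dots> = (\<Sum>n\<in>{1..N}. \<Sum>nn\<in>states (Suc e0) n. bnn (Suc e0) N s nn ^ (2*l) * ?P nn x ^ 2 / ?w nn)"
      unfolding Idx_minus by (rule sum.UNION_disjoint) (auto simp: finite_states states_disjoint)
    also have "\<dots> = (\<Sum>n=1..N. ehr_beta N s n ^ (2*l) * kernel_poly d N p n x x)"
    proof (intro sum.cong refl)
      fix n assume n: "n \<in> {1..N}"
      show "(\<Sum>nn\<in>states (Suc e0) n. bnn (Suc e0) N s nn ^ (2*l) * ?P nn x ^ 2 / ?w nn) = ehr_beta N s n ^ (2*l) * kernel_poly d N p n x x"
        unfolding kp[OF n] sum_distrib_left bnn_def
      proof (intro sum.cong refl)
        fix nn assume "nn \<in> states (Suc e0) n"
        then have sn: "(\<Sum>i=1..Suc e0. nn i) = n" by (rule sum_states)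
        show "ehr_beta N s (\<Sum>i=1..Suc e0. nn i) ^ (2*l) * ?P nn x ^ 2 / ?w nn = ehr_beta N s n ^ (2*l) * (?P nn x ^ 2 / ?w nn)"
          unfolding sn by simp
      qed
    qed
    finally show "chi_sq d N s p x l = (\<Sum>n=1..N. ehr_beta N s n ^ (2*l) * kernel_poly d N p n x x)" .
  qed
  show ?thesis using P1 P2 P3 P4 P5 P6 P7 P8 P9 by blast
qed



end
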